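(* Let $\mathfrak a$ be a commutative $n$-ary superalgebra, invariant with respect to an even non-degenerate skew-symmetric form, which is irreducible and not simple. Let $\mathfrak i$ be a maximal non-trivial ideal and $\mathfrak h$ an isotropic $n$-ary subalgebra of $\mathfrak a$ such that $\mathfrak a=\mathfrak i\oplus\mathfrak h$. Then $\mathfrak a$ is isomorphic to a certain generalized double extension (of some commutative invariant $n$-ary superalgebra $\mathfrak g$ by $\mathfrak h$ via some $\psi_1,\dots,\psi_{n+1}$) with $\psi_n=\psi_{n+1}=0$; such a generalized double extension is called a double extension.
   Context: $\mathbb K=\mathbb R$ or $\mathbb C$; spaces are finite-dimensional $\mathbb Z_2$-graded, $\bar a$ is parity. The form $(\,,)$ is even and skew-symmetric in the super sense, $(a,b)=-(-1)^{\bar a\bar b}(b,a)$. An $n$-ary superalgebra is a space with an $n$-linear map $\{\,\}$; commutative: $\{\dots,a_i,a_{i+1},\dots\}=(-1)^{\bar a_i\bar a_{i+1}}\{\dots,a_{i+1},a_i,\dots\}$; invariant: $(a_0,\{a_1,\dots,a_n\})=(-1)^{\bar a_0\bar a_1}(a_1,\{a_0,a_2,\dots,a_n\})$. Subalgebra: subspace $\mathfrak b$ with $\{\mathfrak b,\dots,\mathfrak b\}\subset\mathfrak b$. Ideal: subspace $\mathfrak i$ with $\{\mathfrak a,\dots,\mathfrak a,\mathfrak i\}\subset\mathfrak i$. Simple: not trivial one-dimensional and no proper ideals. Irreducible: not a direct sum of two ideals on which the form is non-degenerate. Derived potential: $S^*V$ (for $V$ with such a form) carries the Poisson bracket with $[x,y]=(x,y)$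 on $V$, $[v,w_1w_2]=[v,w_1]w_2+(-1)^{\bar v\bar w_1}w_1[v,w_2]$, $[v,w]=-(-1)^{\bar v\bar w}[w,v]$; for $\mu\in S^{n+1}V$, $\{a_1,\dots,a_n\}=[a_1,[\dots,[a_n,\mu]\dots]]$ is a commutative invariant $n$-ary superalgebra, and every such structure arises this way ($\mu$ = derived potential). Generalized double extension: given a commutative invariant $n$-ary superalgebra $\mathfrak g$ with derived potential $\mu\in S^{n+1}\mathfrak g$ and a commutative $n$-ary superalgebra $\mathfrak h$ with multiplication $\nu\in S^n\mathfrak h^*\otimes\mathfrak h\cong S^n\mathfrak h^*\cdot\mathfrak h\subset S^*(\mathfrak h\oplus\mathfrak h^* )$, where $\mathfrak h\oplus\mathfrak h^*$ has the form with $\mathfrak h,\mathfrak h^*$ isotropic, $(\alpha,x)=\alpha(x)$, $(x,\alpha)=-(-1)^{\bar\alpha\bar x}\alpha(x)$; on $\mathfrak d=\mathfrak g\oplus\mathfrak h\oplus\mathfrak h^*$ (orthogonal sum of forms) the commutative invariant $n$-ary superalgebra with derived potential $\mu+\nu+\sum_{i=1}^{n+1}\psi_i$, $\psi_i\in S^i\mathfrak h^*\cdot S^{n-i+1}\mathfrak g$, is the generalized double extension of $\mathfrak g$ by $\mathfrak h$ via the $\psi_i$. *)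

theory Defs
  imports Complex_Main "HOL-Library.Product_Plus" "HOL-Library.Function_Algebras"
begin

text \<open>A finite-dimensional Z2-graded space is given by its even part V0 and odd part V1
  inside an ambient module with scalar multiplication sc; the space itself is V0 + V1.
  Parity True means odd.\<close>

definition ssum :: "'a::ab_group_add set \<Rightarrow> 'a set \<Rightarrow> 'a set" where
  "ssum A B = {x + y | x y. x \<in> A \<and> y \<in> B}"

definition par_part :: "'a set \<Rightarrow> 'a set \<Rightarrow> bool \<Rightarrow> 'a set" where
  "par_part V0 V1 p = (if p then V1 else V0)"

definition psign :: "bool \<Rightarrow> bool \<Rightarrow> 'k::ring_1" where
  "psign p q = (if p \<and> q then - 1 else 1)"

definition superspace :: "('k::field \<Rightarrow> 'a::ab_group_add \<Rightarrow> 'a) \<Rightarrow> 'a set \<Rightarrow> 'a set \<Rightarrow> bool" where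
  "superspace sc V0 V1 \<longleftrightarrow> module.subspace sc V0 \<and> module.subspace sc V1 \<and> V0 \<inter> V1 = {0}
     \<and> (\<exists>B. finite B \<and> B \<subseteq> ssum V0 V1 \<and> ssum V0 V1 \<subseteq> module.span sc B)"

definition bilinear_on :: "('k::field \<Rightarrow> 'a::ab_group_add \<Rightarrow> 'a) \<Rightarrow> 'a set \<Rightarrow> ('a \<Rightarrow> 'a \<Rightarrow> 'k) \<Rightarrow> bool" where
  "bilinear_on sc V B \<longleftrightarrow> (\<forall>x\<in>V. \<forall>y\<in>V. \<forall>z\<in>V. \<forall>c.
      B (x + y) z = B x z + B y z \<and> B (sc c x) z = c * B x z \<and>
      B z (x + y) = B z x + B z y \<and> B z (sc c x) = c * B z x)"

definition nondeg_on :: "('a::zero \<Rightarrow> 'a \<Rightarrow> 'k::zero) \<Rightarrow> 'a set \<Rightarrow> bool" where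
  "nondeg_on B W \<longleftrightarrow> (\<forall>x\<in>W. (\<forall>y\<in>W. B x y = 0) \<longrightarrow> x = 0)"

definition super_form :: "('k::field \<Rightarrow> 'a::ab_group_add \<Rightarrow> 'a) \<Rightarrow> 'a set \<Rightarrow> 'a set \<Rightarrow> ('a \<Rightarrow> 'a \<Rightarrow> 'k) \<Rightarrow> bool" where
  "super_form sc V0 V1 B \<longleftrightarrow> bilinear_on sc (ssum V0 V1) B
     \<and> (\<forall>x\<in>V0. \<forall>y\<in>V1. B x y = 0 \<and> B y x = 0)
     \<and> (\<forall>p q. \<forall>x\<in>par_part V0 V1 p. \<forall>y\<in>par_part V0 V1 q. B x y = - (psign p q * B y x))
     \<and> nondeg_on B (ssum V0 V1)"

definition nary_on :: "('k::field \<Rightarrow> 'a::ab_group_add \<Rightarrow> 'a) \<Rightarrow> 'a set \<Rightarrow> nat \<Rightarrow> ('a list \<Rightarrow> 'a) \<Rightarrow> bool" where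
  "nary_on sc V n M \<longleftrightarrow>
     (\<forall>as. length as = n \<and> set as \<subseteq> V \<longrightarrow> M as \<in> V) \<and>
     (\<forall>as i x y c. length as = n \<and> set as \<subseteq> V \<and> i < n \<and> x \<in> V \<and> y \<in> V \<longrightarrow>
        M (as[i := x + y]) = M (as[i := x]) + M (as[i := y]) \<and>
        M (as[i := sc c x]) = sc c (M (as[i := x])))"

definition commutative_nary :: "('k::field \<Rightarrow> 'a::ab_group_add \<Rightarrow> 'a) \<Rightarrow> 'a set \<Rightarrow> 'a set \<Rightarrow> nat \<Rightarrow> ('a list \<Rightarrow> 'a) \<Rightarrow> bool" where
  "commutative_nary sc V0 V1 n M \<longleftrightarrow>
     (\<forall>as i p q x y. length as = n \<and> set as \<subseteq> ssum V0 V1 \<and> Suc i < n \<and>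
        x \<in> par_part V0 V1 p \<and> y \<in> par_part V0 V1 q \<longrightarrow>
        M (as[i := x, Suc i := y]) = sc (psign p q) (M (as[i := y, Suc i := x])))"

definition invariant_nary :: "'a set \<Rightarrow> 'a set \<Rightarrow> nat \<Rightarrow> ('a \<Rightarrow> 'a \<Rightarrow> 'k::ring_1) \<Rightarrow> ('a::ab_group_add list \<Rightarrow> 'a) \<Rightarrow> bool" where
  "invariant_nary V0 V1 n B M \<longleftrightarrow>
     (\<forall>a0 a1 rest p q. a0 \<in> par_part V0 V1 p \<and> a1 \<in> par_part V0 V1 q \<and>
        length rest = n - 1 \<and> set rest \<subseteq> ssum V0 V1 \<longrightarrow>
        B a0 (M (a1 # rest)) = psign p q * B a1 (M (a0 # rest)))"

definition comm_inv_superalg ::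
  "('k::field \<Rightarrow> 'a::ab_group_add \<Rightarrow> 'a) \<Rightarrow> 'a set \<Rightarrow> 'a set \<Rightarrow> nat \<Rightarrow> ('a \<Rightarrow> 'a \<Rightarrow> 'k) \<Rightarrow> ('a list \<Rightarrow> 'a) \<Rightarrow> bool" where
  "comm_inv_superalg sc V0 V1 n B M \<longleftrightarrow> superspace sc V0 V1 \<and> super_form sc V0 V1 B \<and>
     nary_on sc (ssum V0 V1) n M \<and> commutative_nary sc V0 V1 n M \<and> invariant_nary V0 V1 n B M"

definition graded_subspace :: "('k::field \<Rightarrow> 'a::ab_group_add \<Rightarrow> 'a) \<Rightarrow> 'a set \<Rightarrow> 'a set \<Rightarrow> 'a set \<Rightarrow> bool" where
  "graded_subspace sc V0 V1 W \<longleftrightarrow> module.subspace sc W \<and> W \<subseteq> ssum V0 V1 \<and>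
     W = ssum (W \<inter> V0) (W \<inter> V1)"

definition is_ideal :: "('k::field \<Rightarrow> 'a::ab_group_add \<Rightarrow> 'a) \<Rightarrow> 'a set \<Rightarrow> 'a set \<Rightarrow> nat \<Rightarrow> ('a list \<Rightarrow> 'a) \<Rightarrow> 'a set \<Rightarrow> bool" where
  "is_ideal sc V0 V1 n M I \<longleftrightarrow> graded_subspace sc V0 V1 I \<and>
     (\<forall>as. length as = n \<and> set (butlast as) \<subseteq> ssum V0 V1 \<and> last as \<in> I \<longrightarrow> M as \<in> I)"

definition is_subalgebra :: "('k::field \<Rightarrow> 'a::ab_group_add \<Rightarrow> 'a) \<Rightarrow> 'a set \<Rightarrow> 'a set \<Rightarrow> nat \<Rightarrow> ('a list \<Rightarrow> 'a) \<Rightarrow> 'a set \<Rightarrow> bool" where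
  "is_subalgebra sc V0 V1 n M W \<longleftrightarrow> graded_subspace sc V0 V1 W \<and>
     (\<forall>as. length as = n \<and> set as \<subseteq> W \<longrightarrow> M as \<in> W)"

definition isotropic :: "('a \<Rightarrow> 'a \<Rightarrow> 'k::zero) \<Rightarrow> 'a set \<Rightarrow> bool" where
  "isotropic B W \<longleftrightarrow> (\<forall>x\<in>W. \<forall>y\<in>W. B x y = 0)"

definition irreducible_alg ::
  "('k::field \<Rightarrow> 'a::ab_group_add \<Rightarrow> 'a) \<Rightarrow> 'a set \<Rightarrow> 'a set \<Rightarrow> nat \<Rightarrow> ('a \<Rightarrow> 'a \<Rightarrow> 'k) \<Rightarrow> ('a list \<Rightarrow> 'a) \<Rightarrow> bool" where
  "irreducible_alg sc V0 V1 n B M \<longleftrightarrow> \<not> (\<exists>I J. is_ideal sc V0 V1 n M I \<and> is_ideal sc V0 V1 n M J \<and>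
      I \<noteq> {0} \<and> J \<noteq> {0} \<and> I \<inter> J = {0} \<and> ssum I J = ssum V0 V1 \<and> nondeg_on B I \<and> nondeg_on B J)"

definition trivial_one_dim ::
  "('k::field \<Rightarrow> 'a::ab_group_add \<Rightarrow> 'a) \<Rightarrow> 'a set \<Rightarrow> 'a set \<Rightarrow> nat \<Rightarrow> ('a list \<Rightarrow> 'a) \<Rightarrow> bool" where
  "trivial_one_dim sc V0 V1 n M \<longleftrightarrow> (\<exists>v. v \<noteq> 0 \<and> ssum V0 V1 = range (\<lambda>c. sc c v)) \<and>
     (\<forall>as. length as = n \<and> set as \<subseteq> ssum V0 V1 \<longrightarrow> M as = 0)"

definition simple_alg ::
  "('k::field \<Rightarrow> 'a::ab_group_add \<Rightarrow> 'a) \<Rightarrow> 'a set \<Rightarrow> 'a set \<Rightarrow> nat \<Rightarrow> ('a list \<Rightarrow> 'a) \<Rightarrow> bool" where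
  "simple_alg sc V0 V1 n M \<longleftrightarrow> \<not> trivial_one_dim sc V0 V1 n M \<and>
     \<not> (\<exists>I. is_ideal sc V0 V1 n M I \<and> I \<noteq> {0} \<and> I \<noteq> ssum V0 V1)"

definition maximal_nontrivial_ideal ::
  "('k::field \<Rightarrow> 'a::ab_group_add \<Rightarrow> 'a) \<Rightarrow> 'a set \<Rightarrow> 'a set \<Rightarrow> nat \<Rightarrow> ('a list \<Rightarrow> 'a) \<Rightarrow> 'a set \<Rightarrow> bool" where
  "maximal_nontrivial_ideal sc V0 V1 n M I \<longleftrightarrow> is_ideal sc V0 V1 n M I \<and> I \<noteq> {0} \<and> I \<noteq> ssum V0 V1 \<and>
     (\<forall>J. is_ideal sc V0 V1 n M J \<and> I \<subseteq> J \<and> J \<noteq> ssum V0 V1 \<longrightarrow> J = I)"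

definition super_iso ::
  "('k::field \<Rightarrow> 'a::ab_group_add \<Rightarrow> 'a) \<Rightarrow> 'a set \<Rightarrow> 'a set \<Rightarrow> nat \<Rightarrow> ('a \<Rightarrow> 'a \<Rightarrow> 'k) \<Rightarrow> ('a list \<Rightarrow> 'a) \<Rightarrow>
   ('k \<Rightarrow> 'b::ab_group_add \<Rightarrow> 'b) \<Rightarrow> 'b set \<Rightarrow> 'b set \<Rightarrow> ('b \<Rightarrow> 'b \<Rightarrow> 'k) \<Rightarrow> ('b list \<Rightarrow> 'b) \<Rightarrow>
   ('a \<Rightarrow> 'b) \<Rightarrow> bool" where
  "super_iso sc V0 V1 n B M sc' W0 W1 B' M' \<phi> \<longleftrightarrow>
     bij_betw \<phi> (ssum V0 V1) (ssum W0 W1) \<and> \<phi> ` V0 = W0 \<and> \<phi> ` V1 = W1 \<and>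
     (\<forall>x\<in>ssum V0 V1. \<forall>y\<in>ssum V0 V1. \<forall>c. \<phi> (x + y) = \<phi> x + \<phi> y \<and> \<phi> (sc c x) = sc' c (\<phi> x)) \<and>
     (\<forall>x\<in>ssum V0 V1. \<forall>y\<in>ssum V0 V1. B' (\<phi> x) (\<phi> y) = B x y) \<and>
     (\<forall>as. length as = n \<and> set as \<subseteq> ssum V0 V1 \<longrightarrow> \<phi> (M as) = M' (map \<phi> as))"

text \<open>The space g lives in (nat => k) with pointwise scaling; h is a graded subspace H of the
  ambient space of the given algebra; h* is the space of linear functionals on H (represented
  as functions vanishing outside H). The double extension d = g + h + h* is realised on the
  type (nat => k) * v * (v => k).\<close>

definition scG :: "'k::field \<Rightarrow> (nat \<Rightarrow> 'k) \<Rightarrow> (nat \<Rightarrow> 'k)" where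
  "scG c f = (\<lambda>i. c * f i)"

definition hdual :: "('k::field \<Rightarrow> 'v::ab_group_add \<Rightarrow> 'v) \<Rightarrow> 'v set \<Rightarrow> ('v \<Rightarrow> 'k) set" where
  "hdual sc H = {\<alpha>. (\<forall>x\<in>H. \<forall>y\<in>H. \<forall>c. \<alpha> (x + y) = \<alpha> x + \<alpha> y \<and> \<alpha> (sc c x) = c * \<alpha> x) \<and>
                    (\<forall>x. x \<notin> H \<longrightarrow> \<alpha> x = 0)}"

definition hdual_par :: "('k::field \<Rightarrow> 'v::ab_group_add \<Rightarrow> 'v) \<Rightarrow> 'v set \<Rightarrow> 'v set \<Rightarrow> 'v set \<Rightarrow> bool \<Rightarrow> ('v \<Rightarrow> 'k) set" where
  "hdual_par sc V0 V1 H p = {\<alpha> \<in> hdual sc H. \<forall>x \<in> H \<inter> par_part V0 V1 (\<not> p). \<alpha> x = 0}"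

definition scD :: "('k::field \<Rightarrow> 'v \<Rightarrow> 'v) \<Rightarrow> 'k \<Rightarrow> (nat \<Rightarrow> 'k) \<times> 'v \<times> ('v \<Rightarrow> 'k) \<Rightarrow> (nat \<Rightarrow> 'k) \<times> 'v \<times> ('v \<Rightarrow> 'k)" where
  "scD sc c d = (scG c (fst d), sc c (fst (snd d)), (\<lambda>v. c * snd (snd d) v))"

definition dpart :: "('k::field \<Rightarrow> 'v::ab_group_add \<Rightarrow> 'v) \<Rightarrow> 'v set \<Rightarrow> 'v set \<Rightarrow> 'v set \<Rightarrow>
    (nat \<Rightarrow> 'k) set \<Rightarrow> (nat \<Rightarrow> 'k) set \<Rightarrow> bool \<Rightarrow> ((nat \<Rightarrow> 'k) \<times> 'v \<times> ('v \<Rightarrow> 'k)) set" where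
  "dpart sc V0 V1 H G0 G1 p = {(g, x, \<alpha>). g \<in> par_part G0 G1 p \<and> x \<in> H \<inter> par_part V0 V1 p \<and>
      \<alpha> \<in> hdual_par sc V0 V1 H p}"

definition even_part :: "'v::ab_group_add set \<Rightarrow> 'v set \<Rightarrow> 'v \<Rightarrow> 'v" where
  "even_part V0 V1 x = (THE y. y \<in> V0 \<and> x - y \<in> V1)"

text \<open>Orthogonal sum of the form of g and the form on h + h* with (alpha,x) = alpha(x),
  (x,alpha) = -(-1)^(|alpha||x|) alpha(x).\<close>
definition formD :: "'v::ab_group_add set \<Rightarrow> 'v set \<Rightarrow> ((nat \<Rightarrow> 'k) \<Rightarrow> (nat \<Rightarrow> 'k) \<Rightarrow> 'k::field) \<Rightarrow>
    (nat \<Rightarrow> 'k) \<times> 'v \<times> ('v \<Rightarrow> 'k) \<Rightarrow> (nat \<Rightarrow> 'k) \<times> 'v \<times> ('v \<Rightarrow> 'k) \<Rightarrow> 'k" where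
  "formD V0 V1 Bg d1 d2 =
     (let (g1, x1, a1) = d1; (g2, x2, a2) = d2; x1e = even_part V0 V1 x1 in
      Bg g1 g2 + a1 x2 - a2 x1e + a2 (x1 - x1e))"

text \<open>The blocks of d: label 0 = g, 1 = h, 2 = h*.\<close>
definition dblock :: "('k::field \<Rightarrow> 'v::ab_group_add \<Rightarrow> 'v) \<Rightarrow> 'v set \<Rightarrow> (nat \<Rightarrow> 'k) set \<Rightarrow> nat \<Rightarrow>
    ((nat \<Rightarrow> 'k) \<times> 'v \<times> ('v \<Rightarrow> 'k)) set" where
  "dblock sc H G l = (if l = 0 then (\<lambda>g. (g, 0, 0)) ` G
                      else if l = 1 then (\<lambda>x. (0, x, 0)) ` H
                      else (\<lambda>\<alpha>. (0, 0, \<alpha>)) ` hdual sc H)"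

text \<open>Generalized double extension of g = (G0,G1,Bg,Mg) by the subalgebra h = H of the
  algebra (V0,V1,M), with multiplication Md on d.  The derived potential of Md is encoded by
  the supersymmetric (n+1)-linear form T(a0,...,an) = (a0, Md(a1,...,an)); its component in
  S^p h* . S^q g . S^r h is the restriction of T to arguments of which p lie in h, q in g and
  r in h*.  The condition says: the potential equals mu + nu + sum psi_i, with mu the potential
  of g, nu the multiplication of h, and psi_i (i = 1..n+1) the component in S^i h* . S^(n-i+1) g.\<close>
definition gen_double_ext ::
  "('k::field \<Rightarrow> 'v::ab_group_add \<Rightarrow> 'v) \<Rightarrow> 'v set \<Rightarrow> 'v set \<Rightarrow> nat \<Rightarrow> ('v list \<Rightarrow> 'v) \<Rightarrow> 'v set \<Rightarrow>
   (nat \<Rightarrow> 'k) set \<Rightarrow> (nat \<Rightarrow> 'k) set \<Rightarrow> ((nat \<Rightarrow> 'k) \<Rightarrow> (nat \<Rightarrow> 'k) \<Rightarrow> 'k) \<Rightarrow> ((nat \<Rightarrow> 'k) list \<Rightarrow> (nat \<Rightarrow> 'k)) \<Rightarrow>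
   (((nat \<Rightarrow> 'k) \<times> 'v \<times> ('v \<Rightarrow> 'k)) list \<Rightarrow> (nat \<Rightarrow> 'k) \<times> 'v \<times> ('v \<Rightarrow> 'k)) \<Rightarrow>
   (nat \<Rightarrow> ((nat \<Rightarrow> 'k) \<times> 'v \<times> ('v \<Rightarrow> 'k)) list \<Rightarrow> 'k) \<Rightarrow> bool" where
  "gen_double_ext sc V0 V1 n M H G0 G1 Bg Mg Md \<psi> \<longleftrightarrow>
     comm_inv_superalg scG G0 G1 n Bg Mg \<and>
     comm_inv_superalg (scD sc) (dpart sc V0 V1 H G0 G1 False) (dpart sc V0 V1 H G0 G1 True) n
        (formD V0 V1 Bg) Md \<and>
     (\<forall>ls as. length ls = Suc n \<and> length as = Suc n \<and>
        (\<forall>j < Suc n. ls ! j < 3 \<and> as ! j \<in> dblock sc H (ssum G0 G1) (ls ! j)) \<longrightarrow>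
        (let cG = count_list ls 0; cH = count_list ls 1; cS = count_list ls 2;
             T = formD V0 V1 Bg (hd as) (Md (tl as)) in
          (cG = Suc n \<longrightarrow> T = Bg (fst (hd as)) (Mg (map fst (tl as)))) \<and>
          (cH = n \<and> cS = 1 \<and> ls ! 0 = 2 \<longrightarrow> T = snd (snd (hd as)) (M (map (fst \<circ> snd) (tl as)))) \<and>
          (cS = 0 \<and> 1 \<le> cH \<longrightarrow> T = \<psi> cH as) \<and>
          (\<not> (cG = Suc n \<or> (cH = n \<and> cS = 1) \<or> (cS = 0 \<and> 1 \<le> cH)) \<longrightarrow> T = 0)))"

end

theory Submission
  imports Defs
begin

definition scF :: "'k::field \<Rightarrow> ('a \<Rightarrow> 'k) \<Rightarrow> ('a \<Rightarrow> 'k)" where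
  "scF c f = (\<lambda>x. c * f x)"

lemma vs_scF: "vector_space (scF :: 'k::field \<Rightarrow> ('a \<Rightarrow> 'k) \<Rightarrow> ('a \<Rightarrow> 'k))"
  unfolding vector_space_def module_def scF_def
  by (auto simp: fun_eq_iff algebra_simps)

lemma vs_scG: "vector_space (scG :: 'k::field \<Rightarrow> (nat \<Rightarrow> 'k) \<Rightarrow> (nat \<Rightarrow> 'k))"
  unfolding vector_space_def module_def scG_def
  by (auto simp: fun_eq_iff algebra_simps)

lemma vs_scD: assumes "vector_space sc" shows "vector_space (scD sc)"
proof -
  interpret vector_space sc by fact
  show ?thesis
    unfolding vector_space_def module_def scD_def scG_def
    by (auto simp: fun_eq_iff algebra_simps scale_right_distrib scale_left_distrib)
qed

lemma bil_addL: "bilinear_on sc V B \<Longrightarrow> x \<in> V \<Longrightarrow> y \<in> V \<Longrightarrow> z \<in> V \<Longrightarrow> B (x + y) z = B x z + B y z"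
  unfolding bilinear_on_def by blast
lemma bil_addR: "bilinear_on sc V B \<Longrightarrow> x \<in> V \<Longrightarrow> y \<in> V \<Longrightarrow> z \<in> V \<Longrightarrow> B z (x + y) = B z x + B z y"
  unfolding bilinear_on_def by blast
lemma bil_scL: "bilinear_on sc V B \<Longrightarrow> x \<in> V \<Longrightarrow> z \<in> V \<Longrightarrow> B (sc c x) z = c * B x z"
  unfolding bilinear_on_def by blast
lemma bil_scR: "bilinear_on sc V B \<Longrightarrow> x \<in> V \<Longrightarrow> z \<in> V \<Longrightarrow> B z (sc c x) = c * B z x"
  unfolding bilinear_on_def by blast

lemma sum_fun_apply: "(sum f A) x = sum (\<lambda>a. f a x) A"
  by (induction A rule: infinite_finite_induct) auto

lemma bil_sum_left:
  fixes sc :: "'k::field \<Rightarrow> 'v::ab_group_add \<Rightarrow> 'v"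
  assumes vs: "vector_space sc" and sub: "module.subspace sc W" and bil: "bilinear_on sc W B"
    and fin: "finite t" and tW: "t \<subseteq> W" and x: "x \<in> W"
  shows "(\<Sum>b\<in>t. sc (c b) b) \<in> W \<and> B (\<Sum>b\<in>t. sc (c b) b) x = (\<Sum>b\<in>t. c b * B b x)"
  using fin tW
proof (induction t rule: finite_induct)
  case empty
  interpret vector_space sc by fact
  have "B 0 x = B (0 + 0) x" by simp
  also have "\<dots> = B 0 x + B 0 x" using bil x sub unfolding bilinear_on_def
    by (meson subspace_0)
  finally have "B 0 x = 0" by (metis add_cancel_right_right)
  then show ?case using sub by (simp add: subspace_0)
next
  case (insert a F)
  interpret vector_space sc by fact
  have aW: "a \<in> W" using insert by auto
  have sW: "(\<Sum>b\<in>F. sc (c b) b) \<in> W" and sB: "B (\<Sum>b\<in>F. sc (c b) b) x = (\<Sum>b\<in>F. c b * B b x)"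
    using insert by auto
  have caW: "sc (c a) a \<in> W" using sub aW by (simp add: subspace_scale)
  have "(\<Sum>b\<in>insert a F. sc (c b) b) = sc (c a) a + (\<Sum>b\<in>F. sc (c b) b)"
    using insert by simp
  moreover have "B (sc (c a) a + (\<Sum>b\<in>F. sc (c b) b)) x = c a * B a x + (\<Sum>b\<in>F. c b * B b x)"
    using bil_addL[OF bil caW sW x] bil_scL[OF bil aW x] sB by simp
  ultimately show ?case using insert caW sW sub by (simp add: subspace_add)
qed

lemma lin_sum:
  fixes sc :: "'k::field \<Rightarrow> 'v::ab_group_add \<Rightarrow> 'v"
  assumes vs: "vector_space sc" and sub: "module.subspace sc W"
    and lin: "\<forall>x\<in>W. \<forall>y\<in>W. \<forall>c. f (x + y) = f x + f y \<and> f (sc c x) = c * f x"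
    and fin: "finite t" and tW: "t \<subseteq> W"
  shows "f (\<Sum>b\<in>t. sc (c b) b) = (\<Sum>b\<in>t. c b * f b)"
  using fin tW
proof (induction t rule: finite_induct)
  case empty
  interpret vector_space sc by fact
  have "f 0 = f (0 + 0)" by simp
  also have "\<dots> = f 0 + f 0" using lin sub by (meson subspace_0)
  finally show ?case by (simp, metis add_cancel_right_right)
next
  case (insert a F)
  interpret vector_space sc by fact
  have aW: "a \<in> W" using insert by auto
  have sW: "(\<Sum>b\<in>F. sc (c b) b) \<in> W" using insert sub
    by (intro subspace_sum) (auto intro: subspace_scale)
  have caW: "sc (c a) a \<in> W" using sub aW by (simp add: subspace_scale)
  show ?case using insert lin caW sW aW by simp
qed

lemma riesz:
  fixes sc :: "'k::field \<Rightarrow> 'v::ab_group_add \<Rightarrow> 'v"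
  assumes vs: "vector_space sc" and sub: "module.subspace sc W"
    and fin: "finite S0" and WS0: "W \<subseteq> module.span sc S0"
    and bil: "bilinear_on sc W B" and nd: "nondeg_on B W"
    and lin: "\<forall>x\<in>W. \<forall>y\<in>W. \<forall>c. f (x + y) = f x + f y \<and> f (sc c x) = c * f x"
  shows "\<exists>w\<in>W. \<forall>x\<in>W. B w x = f x"
proof -
  interpret vector_space sc by fact
  interpret D: vector_space "scF :: 'k \<Rightarrow> ('v \<Rightarrow> 'k) \<Rightarrow> ('v \<Rightarrow> 'k)" by (rule vs_scF)
  obtain E where EW: "E \<subseteq> W" and indE: "independent E" and WE: "W \<subseteq> span E"
    by (rule basis_exists[of W]) blast
  have "E \<subseteq> span S0" using EW WS0 by blast
  from independent_span_bound[OF fin indE this] have finE: "finite E" by blast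
  define r where "r g = (\<lambda>x. if x \<in> W then g x else (0::'k))" for g :: "'v \<Rightarrow> 'k"
  define \<Phi> where "\<Phi> b = r (B b)" for b
  define \<delta> where "\<delta> b = r (\<lambda>x. representation E x b)" for b
  define DS where "DS = {g. (\<forall>x\<in>W. \<forall>y\<in>W. \<forall>c. g (x + y) = g x + g y \<and> g (sc c x) = c * g x)
                            \<and> (\<forall>x. x \<notin> W \<longrightarrow> g x = 0)}"
  have Wsp: "W = span E"
    using WE EW sub by (metis span_minimal subset_antisym)
  have DSspan: "DS \<subseteq> D.span (\<delta> ` E)"
  proof
    fix g assume g: "g \<in> DS"
    have "g = (\<Sum>b\<in>E. scF (g b) (\<delta> b))"
    proof (rule ext)
      fix x
      show "g x = (\<Sum>b\<in>E. scF (g b) (\<delta> b)) x"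
      proof (cases "x \<in> W")
        case True
        have xs: "x = (\<Sum>b\<in>E. sc (representation E x b) b)"
          using sum_representation_eq[OF indE, of x E] True WE finE by auto
        have "g x = (\<Sum>b\<in>E. representation E x b * g b)"
          using lin_sum[OF vs sub _ finE EW, of g "\<lambda>b. representation E x b"] g xs
          unfolding DS_def by auto
        then show ?thesis using True by (simp add: sum_fun_apply scF_def \<delta>_def r_def mult.commute)
      next
        case False
        then show ?thesis using g unfolding DS_def by (simp add: sum_fun_apply scF_def \<delta>_def r_def)
      qed
    qed
    also have "\<dots> \<in> D.span (\<delta> ` E)"
      by (intro D.span_sum D.span_scale D.span_base) auto
    finally show "g \<in> D.span (\<delta> ` E)" .
  qed
  have bilW: "\<And>x y z c. x\<in>W \<Longrightarrow> y\<in>W \<Longrightarrow> z\<in>W \<Longrightarrow>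
      B (x + y) z = B x z + B y z \<and> B (sc c x) z = c * B x z \<and>
      B z (x + y) = B z x + B z y \<and> B z (sc c x) = c * B z x"
    using bil unfolding bilinear_on_def by blast
  have PhiDS: "\<Phi> b \<in> DS" if "b \<in> W" for b
    using bilW that unfolding DS_def \<Phi>_def r_def by (auto simp: subspace_add[OF sub] subspace_scale[OF sub])
  have rfDS: "r f \<in> DS"
    using lin unfolding DS_def r_def by (auto simp: subspace_add[OF sub] subspace_scale[OF sub])
  have pull: "\<And>t' u x. t' \<subseteq> E \<Longrightarrow> x \<in> W \<Longrightarrow> (\<Sum>b\<in>t'. sc (u b) b) \<in> W \<and>
        B (\<Sum>b\<in>t'. sc (u b) b) x = (\<Sum>b\<in>t'. u b * B b x)"
    using bil_sum_left[OF vs sub bil] finE EW by (meson finite_subset subset_trans)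
  have injPhi: "inj_on \<Phi> E"
  proof (rule inj_onI)
    fix b1 b2 assume b: "b1 \<in> E" "b2 \<in> E" "\<Phi> b1 = \<Phi> b2"
    have "\<forall>x\<in>W. B (b1 + sc (-1) b2) x = 0"
    proof
      fix x assume x: "x \<in> W"
      have "B b1 x = B b2 x" using fun_cong[OF b(3), of x] x unfolding \<Phi>_def r_def by simp
      moreover have "b1 \<in> W" "b2 \<in> W" "sc (-1) b2 \<in> W" using b EW sub by (auto simp: subspace_scale subspace_neg)
      ultimately show "B (b1 + sc (-1) b2) x = 0"
        using bil_addL[OF bil _ _ x, of b1 "sc (-1) b2"] bil_scL[OF bil _ x, of b2 "-1"] by simp
    qed
    moreover have "b1 + sc (-1) b2 \<in> W" using b EW sub by (meson subset_iff subspace_scale subspace_add)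
    ultimately have "b1 + sc (-1) b2 = 0" using nd unfolding nondeg_on_def by blast
    then show "b1 = b2" by (simp add: scale_minus_left)
  qed
  have indPhi: "D.independent (\<Phi> ` E)"
  proof
    assume "D.dependent (\<Phi> ` E)"
    then obtain t u where t: "finite t" "t \<subseteq> \<Phi> ` E" "(\<Sum>v\<in>t. scF (u v) v) = 0" "\<exists>v\<in>t. u v \<noteq> 0"
      unfolding D.dependent_explicit by blast
    define t' where "t' = {b\<in>E. \<Phi> b \<in> t}"
    have t'E: "t' \<subseteq> E" unfolding t'_def by auto
    have tt': "t = \<Phi> ` t'" using t(2) unfolding t'_def by auto
    have injt': "inj_on \<Phi> t'" using injPhi t'E inj_on_subset by blast
    define w where "w = (\<Sum>b\<in>t'. sc (u (\<Phi> b)) b)"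
    have wW: "w \<in> W" using pull[OF t'E subspace_0[OF sub], of "\<lambda>b. u (\<Phi> b)"] unfolding w_def
      by blast
    have "\<forall>x\<in>W. B w x = 0"
    proof
      fix x assume x: "x \<in> W"
      have "B w x = (\<Sum>b\<in>t'. u (\<Phi> b) * B b x)" using pull[OF t'E x, of "\<lambda>b. u (\<Phi> b)"] unfolding w_def by blast
      also have "\<dots> = (\<Sum>b\<in>t'. u (\<Phi> b) * \<Phi> b x)" using x by (simp add: \<Phi>_def r_def)
      also have "\<dots> = (\<Sum>v\<in>t. u v * v x)" unfolding tt' using sum.reindex[OF injt', of "\<lambda>v. u v * v x"] by (simp only: comp_def)
      also have "\<dots> = (\<Sum>v\<in>t. scF (u v) v) x" by (simp add: sum_fun_apply scF_def)
      also have "\<dots> = 0" using t(3) by simp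
      finally show "B w x = 0" .
    qed
    then have "w = 0" using nd wW unfolding nondeg_on_def by blast
    then have "\<forall>b\<in>t'. u (\<Phi> b) = 0"
      using independentD[OF indE, of t' "\<lambda>b. u (\<Phi> b)"] t'E finE unfolding w_def
      by (meson finite_subset)
    then show False using t(4) tt' by auto
  qed
  have "r f \<in> D.span (\<Phi> ` E)"
  proof (rule ccontr)
    assume nin: "r f \<notin> D.span (\<Phi> ` E)"
    then have ind2: "D.independent (insert (r f) (\<Phi> ` E))"
      using D.independent_insertI indPhi by blast
    have "insert (r f) (\<Phi> ` E) \<subseteq> D.span (\<delta> ` E)"
      using DSspan PhiDS rfDS EW by auto
    then have "card (insert (r f) (\<Phi> ` E)) \<le> card (\<delta> ` E)"
      using D.independent_span_bound[OF _ ind2] finE by blast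
    also have "\<dots> \<le> card E" using finE card_image_le by blast
    finally have "card (insert (r f) (\<Phi> ` E)) \<le> card E" .
    moreover have "r f \<notin> \<Phi> ` E" using nin D.span_base by blast
    moreover have "card (\<Phi> ` E) = card E" using card_image[OF injPhi] .
    ultimately show False using finE by simp
  qed
  then obtain t u where t: "finite t" "t \<subseteq> \<Phi> ` E" "r f = (\<Sum>v\<in>t. scF (u v) v)"
    unfolding D.span_explicit by blast
  define t' where "t' = {b\<in>E. \<Phi> b \<in> t}"
  have t'E: "t' \<subseteq> E" unfolding t'_def by auto
  have tt': "t = \<Phi> ` t'" using t(2) unfolding t'_def by auto
  have injt': "inj_on \<Phi> t'" using injPhi t'E inj_on_subset by blast
  define w where "w = (\<Sum>b\<in>t'. sc (u (\<Phi> b)) b)"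
  have wW: "w \<in> W" using pull[OF t'E subspace_0[OF sub], of "\<lambda>b. u (\<Phi> b)"] unfolding w_def
    by blast
  have "\<forall>x\<in>W. B w x = f x"
  proof
    fix x assume x: "x \<in> W"
    have "B w x = (\<Sum>b\<in>t'. u (\<Phi> b) * B b x)" using pull[OF t'E x, of "\<lambda>b. u (\<Phi> b)"] unfolding w_def by blast
    also have "\<dots> = (\<Sum>b\<in>t'. u (\<Phi> b) * \<Phi> b x)" using x by (simp add: \<Phi>_def r_def)
    also have "\<dots> = (\<Sum>v\<in>t. u v * v x)" unfolding tt' using sum.reindex[OF injt', of "\<lambda>v. u v * v x"] by (simp only: comp_def)
    also have "\<dots> = (\<Sum>v\<in>t. scF (u v) v) x" by (simp add: sum_fun_apply scF_def)
    also have "\<dots> = r f x" using t(3) by simp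
    also have "\<dots> = f x" using x by (simp add: r_def)
    finally show "B w x = f x" .
  qed
  then show ?thesis using wW by blast
qed

lemma list_preimage:
  assumes "set xs \<subseteq> f ` A"
  shows "set (map (inv_into A f) xs) \<subseteq> A \<and> map f (map (inv_into A f) xs) = xs"
  using assms by (auto simp: inv_into_into f_inv_into_f intro!: map_idI)

lemma ssum_image:
  assumes "\<forall>x\<in>ssum V0 V1. \<forall>y\<in>ssum V0 V1. f (x + y) = f x + f y"
    and "0 \<in> V0" "0 \<in> V1"
  shows "ssum (f ` V0) (f ` V1) = f ` ssum V0 V1"
proof -
  have V0A: "V0 \<subseteq> ssum V0 V1" using assms(3) unfolding ssum_def by force
  have V1A: "V1 \<subseteq> ssum V0 V1" using assms(2) unfolding ssum_def by force
  show ?thesis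
  proof
    show "ssum (f ` V0) (f ` V1) \<subseteq> f ` ssum V0 V1"
    proof
      fix z assume "z \<in> ssum (f ` V0) (f ` V1)"
      then obtain x y where "x \<in> V0" "y \<in> V1" "z = f x + f y" unfolding ssum_def by auto
      moreover have "f (x + y) = f x + f y" using assms(1) V0A V1A calculation by blast
      moreover have "x + y \<in> ssum V0 V1" using calculation unfolding ssum_def by blast
      ultimately show "z \<in> f ` ssum V0 V1" by force
    qed
  next
    show "f ` ssum V0 V1 \<subseteq> ssum (f ` V0) (f ` V1)"
    proof
      fix z assume "z \<in> f ` ssum V0 V1"
      then obtain x y where "x \<in> V0" "y \<in> V1" "z = f (x + y)" unfolding ssum_def by auto
      moreover have "f (x + y) = f x + f y" using assms(1) V0A V1A calculation by blast
      ultimately show "z \<in> ssum (f ` V0) (f ` V1)" unfolding ssum_def by blast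
    qed
  qed
qed

lemma transport:
  fixes sc :: "'k::field \<Rightarrow> 'a::ab_group_add \<Rightarrow> 'a" and sc' :: "'k \<Rightarrow> 'b::ab_group_add \<Rightarrow> 'b"
  assumes vs: "vector_space sc" and vs': "vector_space sc'"
    and ci: "comm_inv_superalg sc V0 V1 n B M"
    and lin: "\<forall>x\<in>ssum V0 V1. \<forall>y\<in>ssum V0 V1. \<forall>c. f (x + y) = f x + f y \<and> f (sc c x) = sc' c (f x)"
    and inj: "inj_on f (ssum V0 V1)"
    and W0: "W0 = f ` V0" and W1: "W1 = f ` V1"
    and iso: "\<forall>x\<in>ssum V0 V1. \<forall>y\<in>ssum V0 V1. B' (f x) (f y) = B x y"
    and n1: "1 \<le> n"
    and mul: "\<forall>as. length as = n \<and> set as \<subseteq> ssum V0 V1 \<longrightarrow> M' (map f as) = f (M as)"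
  shows "comm_inv_superalg sc' W0 W1 n B' M'"
proof -
  interpret V: vector_space sc by fact
  interpret W: vector_space sc' by fact
  define A where "A = ssum V0 V1"
  have ss: "superspace sc V0 V1" and sf: "super_form sc V0 V1 B" and na: "nary_on sc A n M"
    and cm: "commutative_nary sc V0 V1 n M" and iv: "invariant_nary V0 V1 n B M"
    using ci unfolding comm_inv_superalg_def A_def by auto
  have sub0: "V.subspace V0" and sub1: "V.subspace V1" and int: "V0 \<inter> V1 = {0}"
    and finB: "\<exists>Bs. finite Bs \<and> Bs \<subseteq> A \<and> A \<subseteq> V.span Bs"
    using ss unfolding superspace_def A_def by auto
  have subA: "V.subspace A" unfolding A_def ssum_def by (rule V.subspace_sums[OF sub0 sub1])
  have V0A: "V0 \<subseteq> A" using V.subspace_0[OF sub1] unfolding A_def ssum_def by force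
  have V1A: "V1 \<subseteq> A" using V.subspace_0[OF sub0] unfolding A_def ssum_def by force
  have fadd: "\<And>x y. x \<in> A \<Longrightarrow> y \<in> A \<Longrightarrow> f (x + y) = f x + f y" using lin unfolding A_def by blast
  have fsc: "\<And>x c. x \<in> A \<Longrightarrow> f (sc c x) = sc' c (f x)" using lin unfolding A_def by blast
  have f0: "f 0 = 0"
  proof -
    have "f 0 = f (0 + 0)" by simp
    also have "\<dots> = f 0 + f 0" using fadd V.subspace_0[OF subA] by blast
    finally show ?thesis by (metis add_cancel_right_right)
  qed
  have injA: "inj_on f A" using inj unfolding A_def .
  have WA: "ssum W0 W1 = f ` A" unfolding W0 W1 A_def
    by (rule ssum_image) (use lin V.subspace_0[OF sub0] V.subspace_0[OF sub1] in auto)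
  have pp: "par_part W0 W1 p = f ` par_part V0 V1 p" for p unfolding par_part_def W0 W1 by simp
  have ppA: "par_part V0 V1 p \<subseteq> A" for p using V0A V1A unfolding par_part_def by auto
  have subW: "W.subspace (f ` S)" if "V.subspace S" "S \<subseteq> A" for S
    unfolding W.subspace_def
  proof (intro conjI ballI allI)
    show "0 \<in> f ` S" using f0 V.subspace_0[OF that(1)] by force
  next
    fix x y assume "x \<in> f ` S" "y \<in> f ` S"
    then obtain a b where "a \<in> S" "b \<in> S" "x = f a" "y = f b" by auto
    then show "x + y \<in> f ` S" using fadd that V.subspace_add[OF that(1)] by (metis image_eqI subsetD)
  next
    fix c x assume "x \<in> f ` S"
    then obtain a where "a \<in> S" "x = f a" by auto
    then show "sc' c x \<in> f ` S" using fsc that V.subspace_scale[OF that(1)] by (metis image_eqI subsetD)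
  qed
  have "W0 \<inter> W1 = {0}"
  proof
    show "W0 \<inter> W1 \<subseteq> {0}"
    proof
      fix z assume "z \<in> W0 \<inter> W1"
      then obtain x y where "x \<in> V0" "y \<in> V1" "z = f x" "z = f y" unfolding W0 W1 by auto
      then have "x = y" using injA V0A V1A by (metis inj_onD subsetD)
      then have "x \<in> V0 \<inter> V1" using \<open>x \<in> V0\<close> \<open>y \<in> V1\<close> by blast
      then show "z \<in> {0}" using int \<open>z = f x\<close> f0 by simp
    qed
    show "{0} \<subseteq> W0 \<inter> W1" using f0 V.subspace_0[OF sub0] V.subspace_0[OF sub1] unfolding W0 W1 by force
  qed
  moreover have "\<exists>Bs. finite Bs \<and> Bs \<subseteq> ssum W0 W1 \<and> ssum W0 W1 \<subseteq> W.span Bs"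
  proof -
    obtain Bs where Bs: "finite Bs" "Bs \<subseteq> A" "A \<subseteq> V.span Bs" using finB by blast
    have "V.subspace {x \<in> A. f x \<in> W.span (f ` Bs)}"
      unfolding V.subspace_def
    proof (intro conjI ballI allI)
      show "0 \<in> {x \<in> A. f x \<in> W.span (f ` Bs)}" using f0 V.subspace_0[OF subA] W.span_zero by auto
    next
      fix x y assume "x \<in> {x \<in> A. f x \<in> W.span (f ` Bs)}" "y \<in> {x \<in> A. f x \<in> W.span (f ` Bs)}"
      then show "x + y \<in> {x \<in> A. f x \<in> W.span (f ` Bs)}"
        using fadd V.subspace_add[OF subA] W.span_add by auto
    next
      fix c x assume "x \<in> {x \<in> A. f x \<in> W.span (f ` Bs)}"
      then show "sc c x \<in> {x \<in> A. f x \<in> W.span (f ` Bs)}"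
        using fsc V.subspace_scale[OF subA] W.span_scale by auto
    qed
    moreover have "Bs \<subseteq> {x \<in> A. f x \<in> W.span (f ` Bs)}" using Bs W.span_base by auto
    ultimately have "V.span Bs \<subseteq> {x \<in> A. f x \<in> W.span (f ` Bs)}" using V.span_minimal by blast
    then have "f ` A \<subseteq> W.span (f ` Bs)" using Bs by blast
    then show ?thesis using Bs WA by (intro exI[of _ "f ` Bs"]) auto
  qed
  ultimately have ssW: "superspace sc' W0 W1"
    unfolding superspace_def W0 W1 using subW sub0 sub1 V0A V1A by auto
  have bil: "bilinear_on sc A B" and ev: "\<forall>x\<in>V0. \<forall>y\<in>V1. B x y = 0 \<and> B y x = 0"
    and sk: "\<forall>p q. \<forall>x\<in>par_part V0 V1 p. \<forall>y\<in>par_part V0 V1 q. B x y = - (psign p q * B y x)"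
    and nd: "nondeg_on B A"
    using sf unfolding super_form_def A_def by blast+
  have iso': "\<And>x y. x \<in> A \<Longrightarrow> y \<in> A \<Longrightarrow> B' (f x) (f y) = B x y" using iso unfolding A_def by blast
  have bilW: "bilinear_on sc' (ssum W0 W1) B'"
    unfolding bilinear_on_def WA
  proof (intro ballI allI)
    fix u v w c assume "u \<in> f ` A" "v \<in> f ` A" "w \<in> f ` A"
    then obtain x y z where xyz: "x \<in> A" "y \<in> A" "z \<in> A" "u = f x" "v = f y" "w = f z" by auto
    have xy: "x + y \<in> A" "sc c x \<in> A" using xyz V.subspace_add[OF subA] V.subspace_scale[OF subA] by auto
    have e: "f x + f y = f (x + y)" "sc' c (f x) = f (sc c x)" using fadd fsc xyz by auto
    show "B' (u + v) w = B' u w + B' v w \<and> B' (sc' c u) w = c * B' u w \<and>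
          B' w (u + v) = B' w u + B' w v \<and> B' w (sc' c u) = c * B' w u"
      unfolding xyz(4-6) e
      using iso'[OF xy(1) xyz(3)] iso'[OF xyz(3) xy(1)] iso'[OF xy(2) xyz(3)] iso'[OF xyz(3) xy(2)]
        iso'[OF xyz(1) xyz(3)] iso'[OF xyz(3) xyz(1)] iso'[OF xyz(2) xyz(3)] iso'[OF xyz(3) xyz(2)]
        bil_addL[OF bil xyz(1-3)] bil_addR[OF bil xyz(1-3)]
        bil_scL[OF bil xyz(1) xyz(3), of c] bil_scR[OF bil xyz(1) xyz(3), of c] by simp
  qed
  have evW: "\<forall>x\<in>W0. \<forall>y\<in>W1. B' x y = 0 \<and> B' y x = 0"
  proof (intro ballI)
    fix x y assume "x \<in> W0" "y \<in> W1"
    then obtain a b where ab: "a \<in> V0" "b \<in> V1" "x = f a" "y = f b" unfolding W0 W1 by auto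
    then have "a \<in> A" "b \<in> A" using V0A V1A by auto
    then show "B' x y = 0 \<and> B' y x = 0" using ab ev iso' by simp
  qed
  have skW: "\<forall>p q. \<forall>x\<in>par_part W0 W1 p. \<forall>y\<in>par_part W0 W1 q. B' x y = - (psign p q * B' y x)"
  proof (intro allI ballI)
    fix p q x y assume "x \<in> par_part W0 W1 p" "y \<in> par_part W0 W1 q"
    then obtain a b where "a \<in> par_part V0 V1 p" "b \<in> par_part V0 V1 q" "x = f a" "y = f b"
      unfolding pp by auto
    then show "B' x y = - (psign p q * B' y x)" using sk iso ppA unfolding A_def by (metis subsetD)
  qed
  have ndW: "nondeg_on B' (ssum W0 W1)"
    unfolding nondeg_on_def WA
  proof (intro ballI impI)
    fix u assume "u \<in> f ` A" and h: "\<forall>v\<in>f ` A. B' u v = 0"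
    then obtain x where x: "x \<in> A" "u = f x" by auto
    have "\<forall>y\<in>A. B x y = 0" using h x iso unfolding A_def by auto
    then have "x = 0" using nd x unfolding nondeg_on_def by blast
    then show "u = 0" using x f0 by simp
  qed
  have sfW: "super_form sc' W0 W1 B'" unfolding super_form_def using bilW evW skW ndW by blast
  have Mcl: "\<And>as. length as = n \<Longrightarrow> set as \<subseteq> A \<Longrightarrow> M as \<in> A" using na unfolding nary_on_def by blast
  have Madd: "\<And>as i x y. length as = n \<Longrightarrow> set as \<subseteq> A \<Longrightarrow> i < n \<Longrightarrow> x \<in> A \<Longrightarrow> y \<in> A \<Longrightarrow>
        M (as[i := x + y]) = M (as[i := x]) + M (as[i := y])"
    using na unfolding nary_on_def by blast
  have Msc: "\<And>as i x c. length as = n \<Longrightarrow> set as \<subseteq> A \<Longrightarrow> i < n \<Longrightarrow> x \<in> A \<Longrightarrow>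
        M (as[i := sc c x]) = sc c (M (as[i := x]))"
    using na unfolding nary_on_def by blast
  have setupd: "set (as[i := x]) \<subseteq> A" if "set as \<subseteq> A" "x \<in> A" for as :: "'a list" and i x
    using that set_update_subset_insert by fastforce
  have mul': "\<And>as. length as = n \<Longrightarrow> set as \<subseteq> A \<Longrightarrow> M' (map f as) = f (M as)"
    using mul unfolding A_def by blast
  have naW: "nary_on sc' (ssum W0 W1) n M'"
    unfolding nary_on_def WA
  proof (intro conjI allI impI)
    fix as' :: "'b list" assume h: "length as' = n \<and> set as' \<subseteq> f ` A"
    define as where "as = map (inv_into A f) as'"
    have as: "set as \<subseteq> A" "map f as = as'" "length as = n" using list_preimage[of as' f A] h unfolding as_def by auto
    show "M' as' \<in> f ` A" using mul'[of as] as Mcl by force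
  next
    fix as' :: "'b list" and i x' y' c
    assume h: "length as' = n \<and> set as' \<subseteq> f ` A \<and> i < n \<and> x' \<in> f ` A \<and> y' \<in> f ` A"
    define as where "as = map (inv_into A f) as'"
    have as: "set as \<subseteq> A" "map f as = as'" "length as = n" using list_preimage[of as' f A] h unfolding as_def by auto
    obtain x y where xy: "x \<in> A" "y \<in> A" "x' = f x" "y' = f y" using h by auto
    have e1: "as'[i := x' + y'] = map f (as[i := x + y])" using as xy fadd by (simp add: map_update)
    have e2: "as'[i := x'] = map f (as[i := x])" "as'[i := y'] = map f (as[i := y])"
      using as xy by (auto simp: map_update)
    have e3: "as'[i := sc' c x'] = map f (as[i := sc c x])" using as xy fsc by (simp add: map_update)
    have xyA: "x + y \<in> A" "sc c x \<in> A" using xy V.subspace_add[OF subA] V.subspace_scale[OF subA] by auto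
    have "M' (as'[i := x' + y']) = f (M (as[i := x + y]))"
      unfolding e1 using mul' as xyA setupd by simp
    also have "\<dots> = f (M (as[i := x]) + M (as[i := y]))" using Madd as xy h by simp
    also have "\<dots> = f (M (as[i := x])) + f (M (as[i := y]))"
      using fadd Mcl setupd as xy by simp
    also have "\<dots> = M' (as'[i := x']) + M' (as'[i := y'])"
      unfolding e2 using mul' as xy setupd by simp
    finally show "M' (as'[i := x' + y']) = M' (as'[i := x']) + M' (as'[i := y'])" .
    have "M' (as'[i := sc' c x']) = f (M (as[i := sc c x]))"
      unfolding e3 using mul' as xyA setupd by simp
    also have "\<dots> = f (sc c (M (as[i := x])))" using Msc as xy h by simp
    also have "\<dots> = sc' c (f (M (as[i := x])))" using fsc Mcl setupd as xy by simp
    also have "\<dots> = sc' c (M' (as'[i := x']))" unfolding e2 using mul' as xy setupd by simp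
    finally show "M' (as'[i := sc' c x']) = sc' c (M' (as'[i := x']))" .
  qed
  have cmW: "commutative_nary sc' W0 W1 n M'"
    unfolding commutative_nary_def WA
  proof (intro allI impI)
    fix as' :: "'b list" and i p q x' y'
    assume h: "length as' = n \<and> set as' \<subseteq> f ` A \<and> Suc i < n \<and> x' \<in> par_part W0 W1 p \<and> y' \<in> par_part W0 W1 q"
    define as where "as = map (inv_into A f) as'"
    have as: "set as \<subseteq> A" "map f as = as'" "length as = n" using list_preimage[of as' f A] h unfolding as_def by auto
    obtain x y where xy: "x \<in> par_part V0 V1 p" "y \<in> par_part V0 V1 q" "x' = f x" "y' = f y"
      using h unfolding pp by auto
    have xyA: "x \<in> A" "y \<in> A" using xy ppA by auto
    have e1: "as'[i := x', Suc i := y'] = map f (as[i := x, Suc i := y])"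
      "as'[i := y', Suc i := x'] = map f (as[i := y, Suc i := x])" using as xy by (auto simp: map_update)
    have s1: "set (as[i := x, Suc i := y]) \<subseteq> A" "set (as[i := y, Suc i := x]) \<subseteq> A"
      using setupd as xyA by auto
    have cmD: "\<forall>as i p q x y. length as = n \<and> set as \<subseteq> A \<and> Suc i < n \<and>
        x \<in> par_part V0 V1 p \<and> y \<in> par_part V0 V1 q \<longrightarrow>
        M (as[i := x, Suc i := y]) = sc (psign p q) (M (as[i := y, Suc i := x]))"
      using cm unfolding commutative_nary_def A_def .
    have "M (as[i := x, Suc i := y]) = sc (psign p q) (M (as[i := y, Suc i := x]))"
      using cmD xy(1,2) as(1,3) h by blast
    then show "M' (as'[i := x', Suc i := y']) = sc' (psign p q) (M' (as'[i := y', Suc i := x']))"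
      unfolding e1 using mul' s1 as fsc Mcl by simp
  qed
  have ivW: "invariant_nary W0 W1 n B' M'"
    unfolding invariant_nary_def
  proof (intro allI impI)
    fix a0' a1' rest' p q
    assume h: "a0' \<in> par_part W0 W1 p \<and> a1' \<in> par_part W0 W1 q \<and> length rest' = n - 1 \<and> set rest' \<subseteq> ssum W0 W1"
    define rest where "rest = map (inv_into A f) rest'"
    have rs: "set rest \<subseteq> A" "map f rest = rest'" "length rest = n - 1"
      using list_preimage[of rest' f A] h WA unfolding rest_def by auto
    obtain a0 a1 where a: "a0 \<in> par_part V0 V1 p" "a1 \<in> par_part V0 V1 q" "a0' = f a0" "a1' = f a1"
      using h unfolding pp by auto
    have aA: "a0 \<in> A" "a1 \<in> A" using a ppA by auto
    show "B' a0' (M' (a1' # rest')) = psign p q * B' a1' (M' (a0' # rest'))"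
    proof -
      obtain m where Suc: "n = Suc m" using n1 by (cases n) auto
      have l: "length (a1 # rest) = n" "length (a0 # rest) = n" using rs Suc by auto
      have e: "a1' # rest' = map f (a1 # rest)" "a0' # rest' = map f (a0 # rest)" using a rs by auto
      have "B a0 (M (a1 # rest)) = psign p q * B a1 (M (a0 # rest))"
        using iv a rs unfolding invariant_nary_def A_def by blast
      moreover have "M (a1 # rest) \<in> A" "M (a0 # rest) \<in> A" using Mcl l rs aA by auto
      moreover have "M' (a1' # rest') = f (M (a1 # rest))" unfolding e(1) by (rule mul') (use l rs aA in auto)
      moreover have "M' (a0' # rest') = f (M (a0 # rest))" unfolding e(2) by (rule mul') (use l rs aA in auto)
      ultimately show ?thesis using iso' aA a(3,4) by simp
    qed
  qed
  show ?thesis unfolding comm_inv_superalg_def using ssW sfW naW cmW ivW by blast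
qed

locale ctx =
  fixes sc :: "'k::field \<Rightarrow> 'v::ab_group_add \<Rightarrow> 'v"
    and V0 V1 :: "'v set" and n :: nat
    and B :: "'v \<Rightarrow> 'v \<Rightarrow> 'k" and M :: "'v list \<Rightarrow> 'v"
    and I H :: "'v set"
  assumes vs: "vector_space sc"
    and n1: "1 \<le> n"
    and ci: "comm_inv_superalg sc V0 V1 n B M"
    and irr: "irreducible_alg sc V0 V1 n B M"
    and mx: "maximal_nontrivial_ideal sc V0 V1 n M I"
    and sa: "is_subalgebra sc V0 V1 n M H"
    and isoH: "isotropic B H"
    and IH0: "I \<inter> H = {0}" and IHA: "ssum I H = ssum V0 V1"

sublocale ctx \<subseteq> V: vector_space sc by (rule vs)

context ctx begin

definition "A = ssum V0 V1"
definition "ev x = even_part V0 V1 x"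
definition "gr S \<longleftrightarrow> V.subspace S \<and> S \<subseteq> A \<and> (\<forall>x\<in>S. ev x \<in> S)"
definition "hom x \<longleftrightarrow> x \<in> V0 \<or> x \<in> V1"

lemma ss: "superspace sc V0 V1" and sf: "super_form sc V0 V1 B" and na: "nary_on sc A n M"
    and cm: "commutative_nary sc V0 V1 n M" and iv: "invariant_nary V0 V1 n B M"
  using ci unfolding comm_inv_superalg_def A_def by blast+

lemma sub0: "V.subspace V0" and sub1: "V.subspace V1" and int01: "V0 \<inter> V1 = {0}"
  and finA: "\<exists>Bs. finite Bs \<and> Bs \<subseteq> A \<and> A \<subseteq> V.span Bs"
  using ss unfolding superspace_def A_def by blast+

lemma subA: "V.subspace A" unfolding A_def ssum_def by (rule V.subspace_sums[OF sub0 sub1])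
lemma V0A: "V0 \<subseteq> A" using V.subspace_0[OF sub1] unfolding A_def ssum_def by force
lemma V1A: "V1 \<subseteq> A" using V.subspace_0[OF sub0] unfolding A_def ssum_def by force
lemma ppA: "par_part V0 V1 p \<subseteq> A" using V0A V1A unfolding par_part_def by auto
lemma A0: "0 \<in> A" using V.subspace_0[OF subA] .
lemma Aadd: "x \<in> A \<Longrightarrow> y \<in> A \<Longrightarrow> x + y \<in> A" using V.subspace_add[OF subA] .
lemma Asc: "x \<in> A \<Longrightarrow> sc c x \<in> A" using V.subspace_scale[OF subA] .
lemma Adiff: "x \<in> A \<Longrightarrow> y \<in> A \<Longrightarrow> x - y \<in> A" using V.subspace_diff[OF subA] .

lemma bil: "bilinear_on sc A B" and evB: "\<forall>x\<in>V0. \<forall>y\<in>V1. B x y = 0 \<and> B y x = 0"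
    and sk: "\<forall>p q. \<forall>x\<in>par_part V0 V1 p. \<forall>y\<in>par_part V0 V1 q. B x y = - (psign p q * B y x)"
    and nd: "nondeg_on B A"
  using sf unfolding super_form_def A_def by blast+

lemma BaddL: "x \<in> A \<Longrightarrow> y \<in> A \<Longrightarrow> z \<in> A \<Longrightarrow> B (x + y) z = B x z + B y z"
  using bil_addL[OF bil] .
lemma BaddR: "x \<in> A \<Longrightarrow> y \<in> A \<Longrightarrow> z \<in> A \<Longrightarrow> B z (x + y) = B z x + B z y"
  using bil_addR[OF bil] .
lemma BscL: "x \<in> A \<Longrightarrow> z \<in> A \<Longrightarrow> B (sc c x) z = c * B x z"
  using bil_scL[OF bil] .
lemma BscR: "x \<in> A \<Longrightarrow> z \<in> A \<Longrightarrow> B z (sc c x) = c * B z x"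
  using bil_scR[OF bil] .
lemma B0L: "z \<in> A \<Longrightarrow> B 0 z = 0"
  using BscL[OF A0, of z 0] by simp
lemma B0R: "z \<in> A \<Longrightarrow> B z 0 = 0"
  using BscR[OF A0, of z 0] by simp
lemma BdiffL: "x \<in> A \<Longrightarrow> y \<in> A \<Longrightarrow> z \<in> A \<Longrightarrow> B (x - y) z = B x z - B y z"
  using BaddL[of "x - y" y z] Adiff by simp
lemma BdiffR: "x \<in> A \<Longrightarrow> y \<in> A \<Longrightarrow> z \<in> A \<Longrightarrow> B z (x - y) = B z x - B z y"
  using BaddR[of "x - y" y z] Adiff by simp

lemma ev_unique: assumes "a \<in> V0" "b \<in> V1" shows "ev (a + b) = a"
proof -
  have ex: "a \<in> V0 \<and> (a + b) - a \<in> V1" using assms by simp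
  have un: "y = a" if "y \<in> V0" "(a + b) - y \<in> V1" for y
  proof -
    have "a - y \<in> V0" using V.subspace_diff[OF sub0] assms that by blast
    moreover have "a - y = ((a + b) - y) - b" by (simp add: algebra_simps)
    then have "a - y \<in> V1" using V.subspace_diff[OF sub1] assms that by metis
    ultimately have "a - y \<in> V0 \<inter> V1" by blast
    then show "y = a" using int01 by auto
  qed
  show ?thesis unfolding ev_def even_part_def
    by (rule the_equality) (use ex un in auto)
qed

lemma ev_props: assumes "x \<in> A" shows "ev x \<in> V0" "x - ev x \<in> V1"
proof -
  obtain a b where ab: "a \<in> V0" "b \<in> V1" "x = a + b" using assms unfolding A_def ssum_def by blast
  then have "ev x = a" using ev_unique by simp
  then show "ev x \<in> V0" "x - ev x \<in> V1" using ab by auto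
qed

lemma ev_V0: "x \<in> V0 \<Longrightarrow> ev x = x"
  using ev_unique[of x 0] V.subspace_0[OF sub1] by simp
lemma ev_V1: "x \<in> V1 \<Longrightarrow> ev x = 0"
  using ev_unique[of 0 x] V.subspace_0[OF sub0] by simp

lemma ev_add: assumes "x \<in> A" "y \<in> A" shows "ev (x + y) = ev x + ev y"
proof -
  have "x + y = (ev x + ev y) + ((x - ev x) + (y - ev y))" by (simp add: algebra_simps)
  moreover have "ev x + ev y \<in> V0" using ev_props assms V.subspace_add[OF sub0] by blast
  moreover have "(x - ev x) + (y - ev y) \<in> V1" using ev_props assms V.subspace_add[OF sub1] by blast
  ultimately show ?thesis using ev_unique by metis
qed

lemma ev_sc: assumes "x \<in> A" shows "ev (sc c x) = sc c (ev x)"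
proof -
  have "sc c x = sc c (ev x) + sc c (x - ev x)" by (simp add: V.scale_right_distrib[symmetric])
  moreover have "sc c (ev x) \<in> V0" using ev_props assms V.subspace_scale[OF sub0] by blast
  moreover have "sc c (x - ev x) \<in> V1" using ev_props assms V.subspace_scale[OF sub1] by blast
  ultimately show ?thesis using ev_unique by metis
qed

lemma ev_A: "x \<in> A \<Longrightarrow> ev x \<in> A" using ev_props V0A by blast
lemma od_A: "x \<in> A \<Longrightarrow> x - ev x \<in> A" using ev_props V1A by blast

lemma hom_A: "hom x \<Longrightarrow> x \<in> A" using V0A V1A unfolding hom_def by blast
lemma hom_pp: "hom x \<Longrightarrow> \<exists>p. x \<in> par_part V0 V1 p"
  unfolding hom_def par_part_def by (metis (full_types))

lemma graded_gr: "graded_subspace sc V0 V1 S \<Longrightarrow> gr S"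
proof -
  assume g: "graded_subspace sc V0 V1 S"
  then have sub: "V.subspace S" and SA: "S \<subseteq> A" and eq: "S = ssum (S \<inter> V0) (S \<inter> V1)"
    unfolding graded_subspace_def A_def by blast+
  have "ev x \<in> S" if "x \<in> S" for x
  proof -
    from that eq have "x \<in> ssum (S \<inter> V0) (S \<inter> V1)" by simp
    then obtain a b where "a \<in> S \<inter> V0" "b \<in> S \<inter> V1" "x = a + b" unfolding ssum_def by blast
    then show ?thesis using ev_unique by simp
  qed
  then show "gr S" unfolding gr_def using sub SA by blast
qed

lemma gr_graded: "gr S \<Longrightarrow> graded_subspace sc V0 V1 S"
proof -
  assume g: "gr S"
  then have sub: "V.subspace S" and SA: "S \<subseteq> A" and e: "\<forall>x\<in>S. ev x \<in> S" unfolding gr_def by blast+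
  have "S = ssum (S \<inter> V0) (S \<inter> V1)"
  proof
    show "S \<subseteq> ssum (S \<inter> V0) (S \<inter> V1)"
    proof
      fix x assume x: "x \<in> S"
      have "ev x \<in> S \<inter> V0" using e x ev_props SA by blast
      moreover have "x - ev x \<in> S \<inter> V1" using e x ev_props SA V.subspace_diff[OF sub] by blast
      moreover have "x = ev x + (x - ev x)" by simp
      ultimately show "x \<in> ssum (S \<inter> V0) (S \<inter> V1)" unfolding ssum_def by blast
    qed
    show "ssum (S \<inter> V0) (S \<inter> V1) \<subseteq> S" unfolding ssum_def using V.subspace_add[OF sub] by blast
  qed
  then show ?thesis unfolding graded_subspace_def A_def using sub SA A_def by blast
qed

lemma gr_ev: "gr S \<Longrightarrow> x \<in> S \<Longrightarrow> ev x \<in> S \<and> ev x \<in> V0" unfolding gr_def using ev_props by blast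
lemma gr_od: "gr S \<Longrightarrow> x \<in> S \<Longrightarrow> x - ev x \<in> S \<and> x - ev x \<in> V1"
  unfolding gr_def using ev_props V.subspace_diff by blast
lemma gr_A: "gr S \<Longrightarrow> S \<subseteq> A" unfolding gr_def by blast
lemma gr_sub: "gr S \<Longrightarrow> V.subspace S" unfolding gr_def by blast
lemma gr_AA: "gr A" unfolding gr_def using subA ev_A by blast

lemma skew1: assumes x: "x \<in> A" and y: "y \<in> par_part V0 V1 p"
  shows "B x y = - (psign p p * B y x)"
proof -
  have e: "ev x \<in> V0" "x - ev x \<in> V1" using ev_props x by auto
  have xs: "x = ev x + (x - ev x)" by simp
  have yA: "y \<in> A" using y ppA by blast
  have "B x y = B (ev x) y + B (x - ev x) y" using BaddL[OF ev_A[OF x] od_A[OF x] yA] by simp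
  moreover have "B y x = B y (ev x) + B y (x - ev x)" using BaddR[OF ev_A[OF x] od_A[OF x] yA] by simp
  moreover have "ev x \<in> par_part V0 V1 False" "x - ev x \<in> par_part V0 V1 True" using e unfolding par_part_def by auto
  ultimately show ?thesis
  proof (cases p)
    case True
    then have "y \<in> V1" using y unfolding par_part_def by simp
    then have "B (ev x) y = 0" "B y (ev x) = 0" using evB e by auto
    moreover have "B (x - ev x) y = - (psign True True * B y (x - ev x))"
      using sk e \<open>y \<in> V1\<close> unfolding par_part_def by (metis (full_types))
    ultimately show ?thesis using True \<open>B x y = _\<close> \<open>B y x = _\<close> by simp
  next
    case False
    then have "y \<in> V0" using y unfolding par_part_def by simp
    then have "B (x - ev x) y = 0" "B y (x - ev x) = 0" using evB e by auto
    moreover have "B (ev x) y = - (psign False False * B y (ev x))"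
      using sk e \<open>y \<in> V0\<close> unfolding par_part_def by (metis (full_types))
    ultimately show ?thesis using False \<open>B x y = _\<close> \<open>B y x = _\<close> by simp
  qed
qed

lemma psign_sq: "psign p p * psign p p = (1::'k)" unfolding psign_def by auto

lemma skew1': assumes x: "x \<in> A" and y: "y \<in> par_part V0 V1 p"
  shows "B y x = - (psign p p * B x y)"
  using skew1[OF x y] psign_sq[of p] by (simp add: algebra_simps)

lemma perp_sym: assumes g: "gr S" and x: "x \<in> A" and h: "\<forall>y\<in>S. B x y = 0"
  shows "\<forall>y\<in>S. B y x = 0"
proof
  fix y assume y: "y \<in> S"
  have ye: "ev y \<in> S" "ev y \<in> par_part V0 V1 False" using gr_ev[OF g y] unfolding par_part_def by auto
  have yo: "y - ev y \<in> S" "y - ev y \<in> par_part V0 V1 True" using gr_od[OF g y] unfolding par_part_def by auto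
  have yA: "ev y \<in> A" "y - ev y \<in> A" using ye yo gr_A[OF g] by auto
  have "B y x = B (ev y) x + B (y - ev y) x" using BaddL[OF yA x] by simp
  also have "\<dots> = 0" using skew1'[OF x ye(2)] skew1'[OF x yo(2)] h ye(1) yo(1) by simp
  finally show "B y x = 0" .
qed

lemma perp_sym': assumes g: "gr S" and x: "x \<in> A" and h: "\<forall>y\<in>S. B y x = 0"
  shows "\<forall>y\<in>S. B x y = 0"
proof
  fix y assume y: "y \<in> S"
  have ye: "ev y \<in> S" "ev y \<in> par_part V0 V1 False" using gr_ev[OF g y] unfolding par_part_def by auto
  have yo: "y - ev y \<in> S" "y - ev y \<in> par_part V0 V1 True" using gr_od[OF g y] unfolding par_part_def by auto
  have yA: "ev y \<in> A" "y - ev y \<in> A" using ye yo gr_A[OF g] by auto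
  have "B x y = B x (ev y) + B x (y - ev y)" using BaddR[OF yA x] by simp
  also have "\<dots> = 0" using skew1[OF x ye(2)] skew1[OF x yo(2)] h ye(1) yo(1) by simp
  finally show "B x y = 0" .
qed

end

definition swp :: "nat \<Rightarrow> 'a list \<Rightarrow> 'a list" where
  "swp i as = as[i := as ! Suc i, Suc i := as ! i]"

lemma swp_len[simp]: "length (swp i as) = length as" unfolding swp_def by simp

lemma swp_set: "Suc i < length as \<Longrightarrow> set (swp i as) \<subseteq> set as"
proof -
  assume l: "Suc i < length as"
  have "set (as[i := as ! Suc i, Suc i := as ! i]) \<subseteq> insert (as ! i) (set (as[i := as ! Suc i]))"
    by (rule set_update_subset_insert)
  also have "\<dots> \<subseteq> insert (as ! i) (insert (as ! Suc i) (set as))"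
    using set_update_subset_insert by (metis insert_mono)
  finally show ?thesis using l unfolding swp_def by (simp add: nth_mem)
qed

lemma swp_nth1: "Suc i < length as \<Longrightarrow> swp i as ! i = as ! Suc i" unfolding swp_def by simp
lemma swp_nth2: "Suc i < length as \<Longrightarrow> swp i as ! Suc i = as ! i" unfolding swp_def by simp
lemma swp_take: "Suc i < length as \<Longrightarrow> take i (swp i as) = take i as" unfolding swp_def by simp
lemma swp_drop: "Suc i < length as \<Longrightarrow> drop (Suc (Suc i)) (swp i as) = drop (Suc (Suc i)) as"
  unfolding swp_def by simp
lemma swp_Cons: "swp (Suc i) (a # as) = a # swp i as" unfolding swp_def by simp
lemma swp_0: "swp 0 (a # b # as) = b # a # as" unfolding swp_def by simp

lemma drop_nth_Cons: "k < length as \<Longrightarrow> drop k as = as ! k # drop (Suc k) as"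
  by (simp add: Cons_nth_drop_Suc)

context ctx begin

definition "T as = B (hd as) (M (tl as))"

lemma Mcl: "length as = n \<Longrightarrow> set as \<subseteq> A \<Longrightarrow> M as \<in> A"
  using na unfolding nary_on_def by blast
lemma Madd: "length as = n \<Longrightarrow> set as \<subseteq> A \<Longrightarrow> i < n \<Longrightarrow> x \<in> A \<Longrightarrow> y \<in> A \<Longrightarrow>
    M (as[i := x + y]) = M (as[i := x]) + M (as[i := y])"
  using na unfolding nary_on_def by blast
lemma Msc: "length as = n \<Longrightarrow> set as \<subseteq> A \<Longrightarrow> i < n \<Longrightarrow> x \<in> A \<Longrightarrow>
    M (as[i := sc c x]) = sc c (M (as[i := x]))"
  using na unfolding nary_on_def by blast
lemma cmD: "length as = n \<Longrightarrow> set as \<subseteq> A \<Longrightarrow> Suc i < n \<Longrightarrow>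
    x \<in> par_part V0 V1 p \<Longrightarrow> y \<in> par_part V0 V1 q \<Longrightarrow>
    M (as[i := x, Suc i := y]) = sc (psign p q) (M (as[i := y, Suc i := x]))"
  using cm unfolding commutative_nary_def A_def by blast
lemma ivD: "a0 \<in> par_part V0 V1 p \<Longrightarrow> a1 \<in> par_part V0 V1 q \<Longrightarrow> length rest = n - 1 \<Longrightarrow>
    set rest \<subseteq> A \<Longrightarrow> B a0 (M (a1 # rest)) = psign p q * B a1 (M (a0 # rest))"
  using iv unfolding invariant_nary_def A_def by blast

lemma set_upd_A: "set as \<subseteq> A \<Longrightarrow> x \<in> A \<Longrightarrow> set (as[i := x]) \<subseteq> A"
  using set_update_subset_insert by fastforce

lemma M_swp:
  assumes "length as = n" "set as \<subseteq> A" "Suc i < n" "hom (as ! i)" "hom (as ! Suc i)"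
  shows "\<exists>s. M as = sc s (M (swp i as))"
proof -
  obtain p q where pq: "as ! i \<in> par_part V0 V1 p" "as ! Suc i \<in> par_part V0 V1 q"
    using hom_pp assms by blast
  have "M (as[i := as ! i, Suc i := as ! Suc i]) = sc (psign p q) (M (as[i := as ! Suc i, Suc i := as ! i]))"
    by (rule cmD[OF assms(1-3) pq])
  then show ?thesis unfolding swp_def by auto
qed

lemma M_mvl_aux:
  assumes S: "V.subspace S"
  shows "\<forall>k as. k + m = n - 1 \<longrightarrow> length as = n \<longrightarrow> set as \<subseteq> A \<longrightarrow> (\<forall>x\<in>set as. hom x) \<longrightarrow>
     M (take k as @ drop (Suc k) as @ [as ! k]) \<in> S \<longrightarrow> M as \<in> S"
proof (induction m)
  case 0
  show ?case
  proof (intro allI impI)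
    fix k and as :: "'v list"
    assume h: "k + 0 = n - 1" "length as = n" "set as \<subseteq> A" "\<forall>x\<in>set as. hom x"
      "M (take k as @ drop (Suc k) as @ [as ! k]) \<in> S"
    have kl: "Suc k = length as" using h(1,2) n1 by simp
    then have "drop (Suc k) as = []" by simp
    moreover have "take k as @ [as ! k] = as" using kl by (metis lessI take_Suc_conv_app_nth take_all order_refl)
    ultimately have "take k as @ drop (Suc k) as @ [as ! k] = as" by simp
    then show "M as \<in> S" using h by simp
  qed
next
  case (Suc m)
  show ?case
  proof (intro allI impI)
    fix k and as :: "'v list"
    assume h: "k + Suc m = n - 1" "length as = n" "set as \<subseteq> A" "\<forall>x\<in>set as. hom x"
      "M (take k as @ drop (Suc k) as @ [as ! k]) \<in> S"
    have kn: "Suc k < n" using h(1) n1 by linarith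
    define as' where "as' = swp k as"
    have l': "length as' = n" using h unfolding as'_def by simp
    have s': "set as' \<subseteq> A" "\<forall>x\<in>set as'. hom x" using swp_set[of k as] kn h unfolding as'_def by auto
    have "take (Suc k) as' @ drop (Suc (Suc k)) as' @ [as' ! Suc k] = take k as @ drop (Suc k) as @ [as ! k]"
    proof -
      have "take (Suc k) as' = take k as @ [as ! Suc k]"
        unfolding as'_def using kn h(2) swp_take[of k as] swp_nth1[of k as]
        by (simp add: take_Suc_conv_app_nth)
      moreover have "drop (Suc k) as = as ! Suc k # drop (Suc (Suc k)) as"
        using kn h(2) by (simp add: drop_nth_Cons)
      ultimately show ?thesis unfolding as'_def using kn h(2) swp_drop[of k as] swp_nth2[of k as] by simp
    qed
    then have "M as' \<in> S" using Suc.IH h(1) l' s' h(5) by (metis add_Suc_shift)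
    moreover obtain s where "M as = sc s (M as')"
      using M_swp[OF h(2) h(3) kn] h(4) kn h(2) unfolding as'_def by (metis Suc_lessD nth_mem)
    ultimately show "M as \<in> S" using V.subspace_scale[OF S] by simp
  qed
qed

lemma M_mvl:
  assumes "V.subspace S" "length as = n" "set as \<subseteq> A" "\<forall>x\<in>set as. hom x" "k < n"
    "M (take k as @ drop (Suc k) as @ [as ! k]) \<in> S"
  shows "M as \<in> S"
proof -
  have "k + (n - 1 - k) = n - 1" using assms(5) by simp
  then show ?thesis using M_mvl_aux[OF assms(1), of "n - 1 - k"] assms(2-6) by blast
qed

lemma homog_reduce:
  fixes F :: "'v list \<Rightarrow> 'w::monoid_add"
  assumes Fadd: "\<And>as j x y. length as = N \<Longrightarrow> set as \<subseteq> A \<Longrightarrow> j < N \<Longrightarrow> x \<in> A \<Longrightarrow> y \<in> A \<Longrightarrow>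
      F (as[j := x + y]) = F (as[j := x]) + F (as[j := y])"
    and Pc: "\<And>u v. P u \<Longrightarrow> P v \<Longrightarrow> P (u + v)"
    and S: "\<And>j. j < N \<Longrightarrow> gr (S j)"
    and hyp: "\<And>as. length as = N \<Longrightarrow> \<forall>j<N. as ! j \<in> S j \<and> hom (as ! j) \<Longrightarrow> P (F as)"
    and as: "length as = N" "\<forall>j<N. as ! j \<in> S j"
  shows "P (F as)"
proof -
  have R: "\<forall>as. length as = N \<and> (\<forall>j<N. as ! j \<in> S j) \<and> (\<forall>j<N. k \<le> j \<longrightarrow> hom (as ! j)) \<longrightarrow> P (F as)" for k
  proof (induction k)
    case 0
    then show ?case using hyp by auto
  next
    case (Suc k)
    show ?case
    proof (intro allI impI)
      fix as :: "'v list"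
      assume h: "length as = N \<and> (\<forall>j<N. as ! j \<in> S j) \<and> (\<forall>j<N. Suc k \<le> j \<longrightarrow> hom (as ! j))"
      show "P (F as)"
      proof (cases "k < N")
        case False
        then show ?thesis using Suc.IH h by auto
      next
        case True
        define e where "e = ev (as ! k)"
        define od where "od = as ! k - e"
        have g: "gr (S k)" using S True by blast
        have ak: "as ! k \<in> S k" using h True by blast
        have eS: "e \<in> S k" "e \<in> V0" using gr_ev[OF g ak] unfolding e_def by auto
        have oS: "od \<in> S k" "od \<in> V1" using gr_od[OF g ak] unfolding od_def e_def by auto
        have setA: "set as \<subseteq> A"
        proof
          fix x assume "x \<in> set as"
          then obtain j where "j < N" "as ! j = x" using h by (auto simp: in_set_conv_nth)
          then show "x \<in> A" using h S gr_A by blast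
        qed
        have eA: "e \<in> A" "od \<in> A" using eS oS gr_A[OF g] by auto
        have c1: "\<forall>j<N. (as[k := e]) ! j \<in> S j" "\<forall>j<N. (as[k := od]) ! j \<in> S j"
          using h eS oS True by (auto simp: nth_list_update)
        have c2a: "\<forall>j<N. k \<le> j \<longrightarrow> hom ((as[k := e]) ! j)"
        proof (intro allI impI)
          fix j assume j: "j < N" "k \<le> j"
          show "hom ((as[k := e]) ! j)"
          proof (cases "j = k")
            case True then show ?thesis using eS h True j unfolding hom_def by simp
          next
            case False then have "Suc k \<le> j" using j by simp
            then show ?thesis using h j False by simp
          qed
        qed
        have c2b: "\<forall>j<N. k \<le> j \<longrightarrow> hom ((as[k := od]) ! j)"
        proof (intro allI impI)
          fix j assume j: "j < N" "k \<le> j"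
          show "hom ((as[k := od]) ! j)"
          proof (cases "j = k")
            case True then show ?thesis using oS h True j unfolding hom_def by simp
          next
            case False then have "Suc k \<le> j" using j by simp
            then show ?thesis using h j False by simp
          qed
        qed
        have P1: "P (F (as[k := e]))" "P (F (as[k := od]))"
          using Suc.IH c1 c2a c2b h by auto
        have "as = as[k := e + od]" unfolding od_def by simp
        then have "F as = F (as[k := e]) + F (as[k := od])" using Fadd[OF _ setA True eA] h by metis
        then show ?thesis using Pc P1 by simp
      qed
    qed
  qed
  show ?thesis using R[of N] as by auto
qed

lemma T_add:
  assumes "length as = Suc n" "set as \<subseteq> A" "j < Suc n" "x \<in> A" "y \<in> A"
  shows "T (as[j := x + y]) = T (as[j := x]) + T (as[j := y])"
proof -
  obtain a0 rest where as: "as = a0 # rest" using assms(1) by (cases as) auto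
  have r: "length rest = n" "set rest \<subseteq> A" "a0 \<in> A" using assms as by auto
  show ?thesis
  proof (cases j)
    case 0
    then show ?thesis using as r assms BaddL Mcl unfolding T_def by simp
  next
    case (Suc j')
    have "M (rest[j' := x + y]) = M (rest[j' := x]) + M (rest[j' := y])"
      using Madd r assms Suc by simp
    moreover have "M (rest[j' := x]) \<in> A" "M (rest[j' := y]) \<in> A"
      using Mcl r assms set_upd_A by auto
    ultimately show ?thesis using as Suc BaddR r unfolding T_def by simp
  qed
qed

lemma T_swp:
  assumes l: "length as = Suc n" and sA: "set as \<subseteq> A" and hm: "\<forall>x\<in>set as. hom x" and i: "i < n"
    and z: "T (swp i as) = 0"
  shows "T as = 0"
proof (cases i)
  case 0
  obtain a0 r where ar: "as = a0 # r" using l by (cases as) auto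
  obtain a1 rest where "r = a1 # rest" using l n1 ar by (cases r) auto
  then have as: "as = a0 # a1 # rest" using ar by simp
  have "hom a0" "hom a1" using hm as by auto
  then obtain p q where pq: "a0 \<in> par_part V0 V1 p" "a1 \<in> par_part V0 V1 q" using hom_pp by blast
  have "B a0 (M (a1 # rest)) = psign p q * B a1 (M (a0 # rest))"
    by (rule ivD[OF pq]) (use l sA as in auto)
  then show ?thesis using z as 0 unfolding T_def by (simp add: swp_0)
next
  case (Suc i')
  obtain a0 rest where as: "as = a0 # rest" using l by (cases as) auto
  have r: "length rest = n" "set rest \<subseteq> A" "a0 \<in> A" "\<forall>x\<in>set rest. hom x" using l sA hm as by auto
  have "Suc i' < n" using i Suc by simp
  then obtain s where s: "M rest = sc s (M (swp i' rest))"
    using M_swp[OF r(1,2)] r(4) r(1) by (metis Suc_lessD nth_mem)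
  have "M (swp i' rest) \<in> A" using Mcl r swp_set \<open>Suc i' < n\<close> by (metis order_trans swp_len)
  then have "T as = s * T (swp i as)" using s as Suc r BscR unfolding T_def by (simp add: swp_Cons)
  then show ?thesis using z by simp
qed

lemma T_mvf_aux:
  "\<forall>as. length as = Suc n \<longrightarrow> set as \<subseteq> A \<longrightarrow> (\<forall>x\<in>set as. hom x) \<longrightarrow> j \<le> n \<longrightarrow>
     T (as ! j # take j as @ drop (Suc j) as) = 0 \<longrightarrow> T as = 0"
proof (induction j)
  case 0
  show ?case
  proof (intro allI impI)
    fix as :: "'v list" assume h: "length as = Suc n" "T (as ! 0 # take 0 as @ drop (Suc 0) as) = 0"
    then have "as ! 0 # take 0 as @ drop (Suc 0) as = as" by (cases as) auto
    then show "T as = 0" using h by simp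
  qed
next
  case (Suc j)
  show ?case
  proof (intro allI impI)
    fix as :: "'v list"
    assume h: "length as = Suc n" "set as \<subseteq> A" "\<forall>x\<in>set as. hom x" "Suc j \<le> n"
      "T (as ! Suc j # take (Suc j) as @ drop (Suc (Suc j)) as) = 0"
    define as' where "as' = swp j as"
    have jl: "Suc j < length as" using h by simp
    have s': "set as' \<subseteq> A" "\<forall>x\<in>set as'. hom x" using swp_set[OF jl] h unfolding as'_def by auto
    have "as' ! j # take j as' @ drop (Suc j) as' = as ! Suc j # take (Suc j) as @ drop (Suc (Suc j)) as"
    proof -
      have "drop (Suc j) as' = as' ! Suc j # drop (Suc (Suc j)) as'"
        using jl by (simp add: drop_nth_Cons as'_def)
      then show ?thesis unfolding as'_def using jl swp_nth1[OF jl] swp_nth2[OF jl] swp_take[OF jl] swp_drop[OF jl]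
        by (simp add: take_Suc_conv_app_nth)
    qed
    then have "T as' = 0" using Suc.IH h s' unfolding as'_def by (metis Suc_leD swp_len)
    moreover have "j < n" using h(4) by simp
    ultimately show "T as = 0" using T_swp[OF h(1-3)] unfolding as'_def by blast
  qed
qed

lemma TZ:
  assumes S: "\<And>j. j \<le> n \<Longrightarrow> gr (S j)" and jj: "jj \<le> n"
    and hyp: "\<And>as. length as = Suc n \<Longrightarrow> \<forall>j\<le>n. as ! j \<in> S j \<and> hom (as ! j) \<Longrightarrow>
        T (as ! jj # take jj as @ drop (Suc jj) as) = 0"
    and as: "length as = Suc n" "\<forall>j\<le>n. as ! j \<in> S j"
  shows "T as = 0"
proof (rule homog_reduce[where N = "Suc n" and F = T and P = "\<lambda>t. t = 0" and S = S])
  show "\<And>as j x y. length as = Suc n \<Longrightarrow> set as \<subseteq> A \<Longrightarrow> j < Suc n \<Longrightarrow> x \<in> A \<Longrightarrow> y \<in> A \<Longrightarrow>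
      T (as[j := x + y]) = T (as[j := x]) + T (as[j := y])" by (rule T_add)
  show "\<And>u v. u = 0 \<Longrightarrow> v = 0 \<Longrightarrow> u + v = (0::'k)" by simp
  show "\<And>j. j < Suc n \<Longrightarrow> gr (S j)" using S by simp
  show "length as = Suc n" "\<forall>j<Suc n. as ! j \<in> S j" using as by auto
next
  fix as :: "'v list" assume h: "length as = Suc n" "\<forall>j<Suc n. as ! j \<in> S j \<and> hom (as ! j)"
  have sA: "set as \<subseteq> A" "\<forall>x\<in>set as. hom x"
    using h S gr_A by (auto simp: in_set_conv_nth) (metis less_Suc_eq_le subsetD)
  show "T as = 0"
    using T_mvf_aux[of jj] hyp[OF h(1)] h sA jj by auto
qed

lemma ideal_any:
  assumes J: "is_ideal sc V0 V1 n M J" and l: "length rs = n" and sA: "set rs \<subseteq> A"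
    and k: "k < n" and rk: "rs ! k \<in> J"
  shows "M rs \<in> J"
proof -
  have g: "gr J" using J graded_gr unfolding is_ideal_def by blast
  have Jid: "\<And>as. length as = n \<Longrightarrow> set (butlast as) \<subseteq> A \<Longrightarrow> last as \<in> J \<Longrightarrow> M as \<in> J"
    using J unfolding is_ideal_def A_def by blast
  define S where "S j = (if j = k then J else A)" for j
  show ?thesis
  proof (rule homog_reduce[where N = n and F = M and P = "\<lambda>z. z \<in> J" and S = S])
    show "\<And>as j x y. length as = n \<Longrightarrow> set as \<subseteq> A \<Longrightarrow> j < n \<Longrightarrow> x \<in> A \<Longrightarrow> y \<in> A \<Longrightarrow>
      M (as[j := x + y]) = M (as[j := x]) + M (as[j := y])" by (rule Madd)
    show "\<And>u v. u \<in> J \<Longrightarrow> v \<in> J \<Longrightarrow> u + v \<in> J" using V.subspace_add gr_sub[OF g] by blast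
    show "\<And>j. j < n \<Longrightarrow> gr (S j)" using g gr_AA unfolding S_def by auto
    show "length rs = n" by fact
    show "\<forall>j<n. rs ! j \<in> S j" using sA rk l unfolding S_def by (auto simp: in_set_conv_nth) (metis nth_mem subsetD)
  next
    fix as :: "'v list" assume h: "length as = n" "\<forall>j<n. as ! j \<in> S j \<and> hom (as ! j)"
    have sA': "set as \<subseteq> A" "\<forall>x\<in>set as. hom x"
      using h gr_A[OF g] unfolding S_def by (auto simp: in_set_conv_nth) (metis subsetD)
    define L where "L = take k as @ drop (Suc k) as @ [as ! k]"
    have "length L = n" unfolding L_def using h k by simp
    moreover have "butlast L = take k as @ drop (Suc k) as" unfolding L_def by (simp add: butlast_append)
    then have "set (butlast L) \<subseteq> A" using sA' by (metis Un_subset_iff in_set_dropD in_set_takeD set_append subsetI subset_iff)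
    moreover have "last L \<in> J" using h(2) k unfolding L_def S_def by (metis last_snoc append_assoc)
    ultimately have "M L \<in> J" using Jid by blast
    then show "M as \<in> J" using M_mvl[OF gr_sub[OF g] h(1) sA' k] unfolding L_def by blast
  qed
qed

end

context ctx begin

definition "Ip = {x \<in> A. \<forall>y\<in>I. B x y = 0}"
definition "Gp = {x \<in> I. \<forall>y\<in>H. B x y = 0}"

lemma I_ideal: "is_ideal sc V0 V1 n M I" and I_ne0: "I \<noteq> {0}" and I_neA: "I \<noteq> A"
  and I_max: "\<And>J. is_ideal sc V0 V1 n M J \<Longrightarrow> I \<subseteq> J \<Longrightarrow> J \<noteq> A \<Longrightarrow> J = I"
  using mx unfolding maximal_nontrivial_ideal_def A_def by blast+

lemma grI: "gr I" using I_ideal graded_gr unfolding is_ideal_def by blast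
lemma grH: "gr H" using sa graded_gr unfolding is_subalgebra_def by blast
lemma H_cl: "length hs = n \<Longrightarrow> set hs \<subseteq> H \<Longrightarrow> M hs \<in> H"
  using sa unfolding is_subalgebra_def by blast
lemma H_iso: "x \<in> H \<Longrightarrow> y \<in> H \<Longrightarrow> B x y = 0" using isoH unfolding isotropic_def by blast
lemma IA: "I \<subseteq> A" using gr_A[OF grI] .
lemma HA: "H \<subseteq> A" using gr_A[OF grH] .

lemma gr_perp:
  assumes gS: "gr S" and gR: "gr R"
  shows "gr {x \<in> R. \<forall>y\<in>S. B x y = 0}"
proof -
  have RA: "R \<subseteq> A" and SA: "S \<subseteq> A" using gS gR gr_A by auto
  have sub: "V.subspace {x \<in> R. \<forall>y\<in>S. B x y = 0}"
    unfolding V.subspace_def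
  proof (intro conjI ballI allI)
    show "0 \<in> {x \<in> R. \<forall>y\<in>S. B x y = 0}" using V.subspace_0[OF gr_sub[OF gR]] B0L SA by auto
  next
    fix x y assume "x \<in> {x \<in> R. \<forall>y\<in>S. B x y = 0}" "y \<in> {x \<in> R. \<forall>y\<in>S. B x y = 0}"
    then show "x + y \<in> {x \<in> R. \<forall>y\<in>S. B x y = 0}"
      using V.subspace_add[OF gr_sub[OF gR]] BaddL RA SA by (auto simp: subsetD)
  next
    fix c x assume "x \<in> {x \<in> R. \<forall>y\<in>S. B x y = 0}"
    then show "sc c x \<in> {x \<in> R. \<forall>y\<in>S. B x y = 0}"
      using V.subspace_scale[OF gr_sub[OF gR]] BscL RA SA by (auto simp: subsetD)
  qed
  have "ev x \<in> {x \<in> R. \<forall>y\<in>S. B x y = 0}" if x: "x \<in> {x \<in> R. \<forall>y\<in>S. B x y = 0}" for x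
  proof -
    have xR: "x \<in> R" and xA: "x \<in> A" and h: "\<forall>y\<in>S. B x y = 0" using x RA by auto
    have "B (ev x) y = 0" if y: "y \<in> S" for y
    proof -
      have yA: "y \<in> A" using y SA by auto
      have e: "ev x \<in> V0" "x - ev x \<in> V1" "ev y \<in> V0" "y - ev y \<in> V1" using ev_props xA yA by auto
      have eyS: "ev y \<in> S" using gr_ev[OF gS y] by simp
      have "B (ev x) y = B (ev x) (ev y) + B (ev x) (y - ev y)"
        using BaddR[OF ev_A[OF yA] od_A[OF yA] ev_A[OF xA]] by simp
      also have "\<dots> = B (ev x) (ev y)" using evB e by simp
      also have "\<dots> = B x (ev y) - B (x - ev x) (ev y)"
        using BdiffL[OF xA od_A[OF xA] ev_A[OF yA]] by simp
      also have "\<dots> = 0" using h eyS evB e by simp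
      finally show ?thesis .
    qed
    then show ?thesis using gr_ev[OF gR xR] by simp
  qed
  then show ?thesis unfolding gr_def using sub RA by blast
qed

lemma grIp: "gr Ip" unfolding Ip_def using gr_perp[OF grI gr_AA] .
lemma grGp: "gr Gp" unfolding Gp_def using gr_perp[OF grH grI] .
lemma IpA: "Ip \<subseteq> A" unfolding Ip_def by blast
lemma GpI: "Gp \<subseteq> I" unfolding Gp_def by blast

lemma Ip_left: "x \<in> Ip \<Longrightarrow> y \<in> I \<Longrightarrow> B x y = 0" unfolding Ip_def by blast
lemma Ip_right: "x \<in> Ip \<Longrightarrow> y \<in> I \<Longrightarrow> B y x = 0"
  using perp_sym[OF grI] unfolding Ip_def by blast
lemma Gp_left: "x \<in> Gp \<Longrightarrow> y \<in> H \<Longrightarrow> B x y = 0" unfolding Gp_def by blast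
lemma Gp_right: "x \<in> Gp \<Longrightarrow> y \<in> H \<Longrightarrow> B y x = 0"
  using perp_sym[OF grH] GpI IA unfolding Gp_def by blast

lemma set_butlast_last: "xs \<noteq> [] \<Longrightarrow> set xs = insert (last xs) (set (butlast xs))"
proof -
  assume "xs \<noteq> []"
  then have "set xs = set (butlast xs @ [last xs])" by simp
  then show ?thesis by auto
qed

lemma Ip_ideal: "is_ideal sc V0 V1 n M Ip"
  unfolding is_ideal_def
proof (intro conjI allI impI)
  show "graded_subspace sc V0 V1 Ip" using gr_graded[OF grIp] .
next
  fix as :: "'v list"
  assume h: "length as = n \<and> set (butlast as) \<subseteq> ssum V0 V1 \<and> last as \<in> Ip"
  have ne: "as \<noteq> []" using h n1 by auto
  have sA: "set as \<subseteq> A" using h IpA set_butlast_last[OF ne] unfolding A_def by auto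
  have MA: "M as \<in> A" using Mcl h sA by blast
  have "\<forall>y\<in>I. B y (M as) = 0"
  proof
    fix y assume y: "y \<in> I"
    define S where "S j = (if j = 0 then I else if j = n then Ip else A)" for j
    have L: "length (y # as) = Suc n" "\<forall>j\<le>n. (y # as) ! j \<in> S j"
    proof -
      show "length (y # as) = Suc n" using h by simp
      show "\<forall>j\<le>n. (y # as) ! j \<in> S j"
      proof (intro allI impI)
        fix j assume j: "j \<le> n"
        show "(y # as) ! j \<in> S j"
        proof (cases j)
          case 0 then show ?thesis using y n1 unfolding S_def by simp
        next
          case (Suc j')
          then have "j' < length as" using j h by simp
          then have "as ! j' \<in> A" using sA by (simp add: subsetD)
          moreover have "j = n \<Longrightarrow> as ! j' = last as"
          proof -
            assume "j = n"
            then have "j' = length as - 1" using Suc h by simp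
            then show ?thesis using ne by (simp add: last_conv_nth)
          qed
          ultimately show ?thesis using Suc h unfolding S_def by auto
        qed
      qed
    qed
    have "T (y # as) = 0"
    proof (rule TZ[where S = S and jj = n])
      show "\<And>j. j \<le> n \<Longrightarrow> gr (S j)" unfolding S_def using grI grIp gr_AA by auto
      show "n \<le> n" by simp
      show "length (y # as) = Suc n" "\<forall>j\<le>n. (y # as) ! j \<in> S j" using L by auto
    next
      fix cs :: "'v list" assume c: "length cs = Suc n" "\<forall>j\<le>n. cs ! j \<in> S j \<and> hom (cs ! j)"
      have cA: "set cs \<subseteq> A"
      proof
        fix x assume "x \<in> set cs"
        then obtain j where "j < Suc n" "cs ! j = x" using c by (auto simp: in_set_conv_nth)
        then have "x \<in> S j" using c by auto
        moreover have "S j \<subseteq> A" unfolding S_def using IA IpA by auto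
        ultimately show "x \<in> A" by blast
      qed
      have "M (take n cs) \<in> I"
      proof (rule ideal_any[OF I_ideal, where k = 0])
        show "length (take n cs) = n" using c by simp
        show "set (take n cs) \<subseteq> A" using cA by (meson in_set_takeD subset_iff)
        show "0 < n" using n1 by simp
        show "take n cs ! 0 \<in> I" using c n1 unfolding S_def by auto
      qed
      moreover have "cs ! n \<in> Ip" using c unfolding S_def using n1 by auto
      moreover have "drop (Suc n) cs = []" using c by simp
      ultimately show "T (cs ! n # take n cs @ drop (Suc n) cs) = 0"
        unfolding T_def using Ip_left by simp
    qed
    then show "B y (M as) = 0" unfolding T_def by simp
  qed
  then have "\<forall>y\<in>I. B (M as) y = 0" using perp_sym'[OF grI MA] by blast
  then show "M as \<in> Ip" unfolding Ip_def using MA by blast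
qed

lemma ssum_gr: assumes "gr S" "gr R" shows "gr (ssum S R)"
proof -
  have sub: "V.subspace (ssum S R)" unfolding ssum_def using V.subspace_sums gr_sub assms by blast
  have "ssum S R \<subseteq> A" unfolding ssum_def using gr_A assms Aadd by blast
  moreover have "ev x \<in> ssum S R" if "x \<in> ssum S R" for x
  proof -
    obtain s r where sr: "s \<in> S" "r \<in> R" "x = s + r" using \<open>x \<in> ssum S R\<close> unfolding ssum_def by blast
    then have "ev x = ev s + ev r" using ev_add gr_A assms by blast
    then show ?thesis using gr_ev assms sr unfolding ssum_def by blast
  qed
  ultimately show ?thesis unfolding gr_def using sub by blast
qed

lemma ssum_ideal:
  assumes J1: "is_ideal sc V0 V1 n M J1" and J2: "is_ideal sc V0 V1 n M J2"
  shows "is_ideal sc V0 V1 n M (ssum J1 J2)"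
  unfolding is_ideal_def
proof (intro conjI allI impI)
  have g1: "gr J1" and g2: "gr J2" using J1 J2 graded_gr unfolding is_ideal_def by blast+
  show "graded_subspace sc V0 V1 (ssum J1 J2)" using gr_graded[OF ssum_gr[OF g1 g2]] .
  fix as :: "'v list"
  assume h: "length as = n \<and> set (butlast as) \<subseteq> ssum V0 V1 \<and> last as \<in> ssum J1 J2"
  obtain a b where ab: "a \<in> J1" "b \<in> J2" "last as = a + b" using h unfolding ssum_def by blast
  have ne: "as \<noteq> []" using h n1 by auto
  have aA: "a \<in> A" "b \<in> A" using ab g1 g2 gr_A by auto
  define bs where "bs = butlast as"
  have asb: "as = bs @ [last as]" unfolding bs_def using ne by simp
  have lb: "length bs = n - 1" using h unfolding bs_def by simp
  have sb: "set bs \<subseteq> A" using h unfolding bs_def A_def by simp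
  have u: "(bs @ [a])[n - 1 := z] = bs @ [z]" for z using lb by (simp add: list_update_append)
  have sAs: "set (bs @ [a]) \<subseteq> A" using sb aA by auto
  have as2: "as = bs @ [a + b]" by (metis asb ab(3))
  have "M as = M ((bs @ [a])[n - 1 := a + b])" by (simp only: as2 u)
  also have "\<dots> = M ((bs @ [a])[n - 1 := a]) + M ((bs @ [a])[n - 1 := b])"
    by (rule Madd[OF _ sAs _ aA]) (use lb n1 in auto)
  also have "\<dots> = M (bs @ [a]) + M (bs @ [b])" by (simp only: u)
  finally have e: "M as = M (bs @ [a]) + M (bs @ [b])" .
  have J1cl: "\<And>as. length as = n \<Longrightarrow> set (butlast as) \<subseteq> A \<Longrightarrow> last as \<in> J1 \<Longrightarrow> M as \<in> J1"
    using J1 unfolding is_ideal_def A_def by blast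
  have J2cl: "\<And>as. length as = n \<Longrightarrow> set (butlast as) \<subseteq> A \<Longrightarrow> last as \<in> J2 \<Longrightarrow> M as \<in> J2"
    using J2 unfolding is_ideal_def A_def by blast
  have "M (bs @ [a]) \<in> J1" by (rule J1cl) (use lb sb n1 ab in auto)
  moreover have "M (bs @ [b]) \<in> J2" by (rule J2cl) (use lb sb n1 ab in auto)
  ultimately show "M as \<in> ssum J1 J2" using e unfolding ssum_def by blast
qed

lemma Ip_sub_I: "Ip \<subseteq> I"
proof -
  define J where "J = ssum I Ip"
  have Jid: "is_ideal sc V0 V1 n M J" unfolding J_def using ssum_ideal[OF I_ideal Ip_ideal] .
  have IJ: "I \<subseteq> J" unfolding J_def ssum_def using V.subspace_0[OF gr_sub[OF grIp]] by force
  show ?thesis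
  proof (cases "J = A")
    case False
    then have "J = I" using I_max Jid IJ by blast
    then show ?thesis unfolding J_def ssum_def using V.subspace_0[OF gr_sub[OF grI]] by force
  next
    case True
    have decA: "\<And>z. z \<in> A \<Longrightarrow> \<exists>i p. i \<in> I \<and> p \<in> Ip \<and> z = i + p" using True unfolding J_def ssum_def by blast
    have allz: "x = 0" if x: "x \<in> Ip" and h: "\<forall>y\<in>Ip. B x y = 0" for x
    proof -
      have "\<forall>z\<in>A. B x z = 0"
      proof
        fix z assume "z \<in> A"
        then obtain i p where ip: "i \<in> I" "p \<in> Ip" "z = i + p" using decA by blast
        then show "B x z = 0" using BaddR[of i p x] IA IpA x h Ip_left by (auto simp: subsetD)
      qed
      then show ?thesis using nd x IpA unfolding nondeg_on_def by blast
    qed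
    have int: "I \<inter> Ip = {0}"
    proof
      show "I \<inter> Ip \<subseteq> {0}"
      proof
        fix x assume x: "x \<in> I \<inter> Ip"
        have "\<forall>y\<in>Ip. B x y = 0" using x Ip_right by blast
        then show "x \<in> {0}" using allz x by blast
      qed
      show "{0} \<subseteq> I \<inter> Ip" using V.subspace_0[OF gr_sub[OF grI]] V.subspace_0[OF gr_sub[OF grIp]] by blast
    qed
    have Ipne: "Ip \<noteq> {0}"
    proof
      assume "Ip = {0}"
      then have "J = I" unfolding J_def ssum_def by auto
      then show False using True I_neA by simp
    qed
    have ndI: "nondeg_on B I"
      unfolding nondeg_on_def
    proof (intro ballI impI)
      fix x assume "x \<in> I" "\<forall>y\<in>I. B x y = 0"
      then have "x \<in> I \<inter> Ip" unfolding Ip_def using IA by blast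
      then show "x = 0" using int by blast
    qed
    have ndIp: "nondeg_on B Ip" unfolding nondeg_on_def using allz by blast
    have "\<exists>I J. is_ideal sc V0 V1 n M I \<and> is_ideal sc V0 V1 n M J \<and>
      I \<noteq> {0} \<and> J \<noteq> {0} \<and> I \<inter> J = {0} \<and> ssum I J = ssum V0 V1 \<and> nondeg_on B I \<and> nondeg_on B J"
      using I_ideal Ip_ideal I_ne0 Ipne int True ndI ndIp unfolding J_def A_def by blast
    then show ?thesis using irr unfolding irreducible_alg_def by blast
  qed
qed

end

context ctx begin

definition "piH0 x = (THE h. h \<in> H \<and> x - h \<in> I)"

lemma piH0_unique: assumes "h \<in> H" "x - h \<in> I" "h' \<in> H" "x - h' \<in> I" shows "h = h'"
proof -
  have "h - h' = (x - h') - (x - h)" by (simp add: algebra_simps)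
  then have "h - h' \<in> I" using V.subspace_diff[OF gr_sub[OF grI]] assms by metis
  moreover have "h - h' \<in> H" using V.subspace_diff[OF gr_sub[OF grH]] assms by blast
  ultimately have "h - h' \<in> I \<inter> H" by blast
  then show ?thesis using IH0 by simp
qed

lemma piH0_props: assumes "x \<in> A" shows "piH0 x \<in> H" "x - piH0 x \<in> I"
proof -
  obtain i h where ih: "i \<in> I" "h \<in> H" "x = i + h" using assms IHA unfolding A_def ssum_def by blast
  then have ex: "h \<in> H \<and> x - h \<in> I" by simp
  have "piH0 x = h" unfolding piH0_def
    by (rule the_equality) (use ex piH0_unique in blast)+
  then show "piH0 x \<in> H" "x - piH0 x \<in> I" using ex by auto
qed

lemma piH0_eq: "h \<in> H \<Longrightarrow> x - h \<in> I \<Longrightarrow> x \<in> A \<Longrightarrow> piH0 x = h"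
  using piH0_unique piH0_props by blast

lemma piH0_add: "x \<in> A \<Longrightarrow> y \<in> A \<Longrightarrow> piH0 (x + y) = piH0 x + piH0 y"
proof -
  assume xy: "x \<in> A" "y \<in> A"
  have "piH0 x + piH0 y \<in> H" using piH0_props xy V.subspace_add[OF gr_sub[OF grH]] by blast
  moreover have "(x + y) - (piH0 x + piH0 y) = (x - piH0 x) + (y - piH0 y)" by (simp add: algebra_simps)
  then have "(x + y) - (piH0 x + piH0 y) \<in> I" using piH0_props xy V.subspace_add[OF gr_sub[OF grI]] by metis
  ultimately show ?thesis using piH0_eq Aadd xy by blast
qed

lemma piH0_sc: "x \<in> A \<Longrightarrow> piH0 (sc c x) = sc c (piH0 x)"
proof -
  assume x: "x \<in> A"
  have "sc c (piH0 x) \<in> H" using piH0_props x V.subspace_scale[OF gr_sub[OF grH]] by blast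
  moreover have "sc c x - sc c (piH0 x) = sc c (x - piH0 x)" by (simp add: V.scale_right_diff_distrib)
  then have "sc c x - sc c (piH0 x) \<in> I" using piH0_props x V.subspace_scale[OF gr_sub[OF grI]] by metis
  ultimately show ?thesis using piH0_eq Asc x by blast
qed

lemma piH0_I: "i \<in> I \<Longrightarrow> piH0 i = 0"
  using piH0_eq[of 0 i] V.subspace_0[OF gr_sub[OF grH]] IA by auto

lemma hdual_add: "\<alpha> \<in> hdual sc H \<Longrightarrow> x \<in> H \<Longrightarrow> y \<in> H \<Longrightarrow> \<alpha> (x + y) = \<alpha> x + \<alpha> y"
  unfolding hdual_def by blast
lemma hdual_sc: "\<alpha> \<in> hdual sc H \<Longrightarrow> x \<in> H \<Longrightarrow> \<alpha> (sc c x) = c * \<alpha> x"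
  unfolding hdual_def by blast
lemma hdual_out: "\<alpha> \<in> hdual sc H \<Longrightarrow> x \<notin> H \<Longrightarrow> \<alpha> x = 0"
  unfolding hdual_def by blast
lemma hdual_0: "\<alpha> \<in> hdual sc H \<Longrightarrow> \<alpha> 0 = 0"
  using hdual_sc[of \<alpha> 0 0] V.subspace_0[OF gr_sub[OF grH]] by simp

lemma riesz_H: assumes a: "\<alpha> \<in> hdual sc H" shows "\<exists>p\<in>Ip. \<forall>x\<in>H. B p x = \<alpha> x"
proof -
  obtain Bs where Bs: "finite Bs" "Bs \<subseteq> A" "A \<subseteq> V.span Bs" using finA by blast
  define f where "f x = \<alpha> (piH0 x)" for x
  have lin: "\<forall>x\<in>A. \<forall>y\<in>A. \<forall>c. f (x + y) = f x + f y \<and> f (sc c x) = c * f x"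
    unfolding f_def using piH0_add piH0_sc piH0_props hdual_add[OF a] hdual_sc[OF a] by simp
  obtain w where w: "w \<in> A" "\<forall>x\<in>A. B w x = f x"
    using riesz[OF vs subA Bs(1) Bs(3) bil nd lin] by blast
  have "w \<in> Ip" unfolding Ip_def using w piH0_I IA hdual_0[OF a] unfolding f_def by auto
  moreover have "\<forall>x\<in>H. B w x = \<alpha> x"
  proof
    fix x assume x: "x \<in> H"
    have "x \<in> A" using x HA by blast
    then have "piH0 x = x" using piH0_eq[of x x] x V.subspace_0[OF gr_sub[OF grI]] by simp
    then show "B w x = \<alpha> x" using w x HA unfolding f_def by auto
  qed
  ultimately show ?thesis by blast
qed

lemma Ip_unique: assumes p: "p \<in> Ip" and h: "\<forall>x\<in>H. B p x = 0" shows "p = 0"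
proof -
  have "\<forall>z\<in>A. B p z = 0"
  proof
    fix z assume "z \<in> A"
    then obtain i x where ix: "i \<in> I" "x \<in> H" "z = i + x" using IHA unfolding A_def ssum_def by blast
    then show "B p z = 0" using BaddR[of i x p] IA HA IpA p h Ip_left by (auto simp: subsetD)
  qed
  then show ?thesis using nd p IpA unfolding nondeg_on_def by blast
qed

lemma riesz_H_par: assumes a: "\<alpha> \<in> hdual_par sc V0 V1 H q"
  shows "\<exists>p\<in>Ip \<inter> par_part V0 V1 q. \<forall>x\<in>H. B p x = \<alpha> x"
proof -
  have a1: "\<alpha> \<in> hdual sc H" and a2: "\<forall>x\<in>H \<inter> par_part V0 V1 (\<not> q). \<alpha> x = 0"
    using a unfolding hdual_par_def by auto
  obtain w where w: "w \<in> Ip" "\<forall>x\<in>H. B w x = \<alpha> x" using riesz_H[OF a1] by blast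
  have wA: "w \<in> A" using w IpA by auto
  have ew: "ev w \<in> Ip" "ev w \<in> V0" "w - ev w \<in> Ip" "w - ev w \<in> V1" using gr_ev[OF grIp w(1)] gr_od[OF grIp w(1)] by auto
  have key: "B (ev w) x = \<alpha> (ev x) \<and> B (w - ev w) x = \<alpha> (x - ev x)" if x: "x \<in> H" for x
  proof -
    have xA: "x \<in> A" using x HA by auto
    have ex: "ev x \<in> H" "ev x \<in> V0" "x - ev x \<in> H" "x - ev x \<in> V1" using gr_ev[OF grH x] gr_od[OF grH x] by auto
    have "B (ev w) x = B (ev w) (ev x) + B (ev w) (x - ev x)" using BaddR[OF ev_A[OF xA] od_A[OF xA] ev_A[OF wA]] by simp
    also have "\<dots> = B (ev w) (ev x)" using evB ew ex by simp
    also have "\<dots> = B w (ev x) - B (w - ev w) (ev x)" using BdiffL[OF wA od_A[OF wA] ev_A[OF xA]] by simp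
    also have "\<dots> = \<alpha> (ev x)" using evB ew ex w by simp
    finally have 1: "B (ev w) x = \<alpha> (ev x)" .
    have "B (w - ev w) x = B (w - ev w) (ev x) + B (w - ev w) (x - ev x)" using BaddR[OF ev_A[OF xA] od_A[OF xA] od_A[OF wA]] by simp
    also have "\<dots> = B (w - ev w) (x - ev x)" using evB ew ex by simp
    also have "\<dots> = B w (x - ev x) - B (ev w) (x - ev x)" using BdiffL[OF wA ev_A[OF wA] od_A[OF xA]] by simp
    also have "\<dots> = \<alpha> (x - ev x)" using evB ew ex w by simp
    finally show ?thesis using 1 by simp
  qed
  have split: "\<alpha> x = \<alpha> (ev x) + \<alpha> (x - ev x)" if x: "x \<in> H" for x
    using hdual_add[OF a1, of "ev x" "x - ev x"] gr_ev[OF grH x] gr_od[OF grH x] by simp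
  show ?thesis
  proof (cases q)
    case True
    have "\<forall>x\<in>H. B (w - ev w) x = \<alpha> x"
    proof
      fix x assume x: "x \<in> H"
      have "\<alpha> (ev x) = 0" using a2 gr_ev[OF grH x] True unfolding par_part_def by auto
      then show "B (w - ev w) x = \<alpha> x" using key[OF x] split[OF x] by simp
    qed
    then show ?thesis using ew True unfolding par_part_def by auto
  next
    case False
    have "\<forall>x\<in>H. B (ev w) x = \<alpha> x"
    proof
      fix x assume x: "x \<in> H"
      have "\<alpha> (x - ev x) = 0" using a2 gr_od[OF grH x] False unfolding par_part_def by auto
      then show "B (ev w) x = \<alpha> x" using key[OF x] split[OF x] by simp
    qed
    then show ?thesis using ew False unfolding par_part_def by auto
  qed
qed

lemma dec_exists: assumes x: "x \<in> A" shows "\<exists>g h p. g \<in> Gp \<and> h \<in> H \<and> p \<in> Ip \<and> x = g + h + p"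
proof -
  define h where "h = piH0 x"
  define i where "i = x - h"
  have hi: "h \<in> H" "i \<in> I" using piH0_props[OF x] unfolding h_def i_def by auto
  have iA: "i \<in> A" using hi IA by auto
  define \<alpha> where "\<alpha> y = (if y \<in> H then B i y else 0)" for y
  have a: "\<alpha> \<in> hdual sc H" unfolding hdual_def \<alpha>_def
    using BaddR BscR iA HA V.subspace_add[OF gr_sub[OF grH]] V.subspace_scale[OF gr_sub[OF grH]]
    by (auto simp: subsetD)
  obtain p where p: "p \<in> Ip" "\<forall>y\<in>H. B p y = \<alpha> y" using riesz_H[OF a] by blast
  have pI: "p \<in> I" using p Ip_sub_I by auto
  define g where "g = i - p"
  have gI: "g \<in> I" using V.subspace_diff[OF gr_sub[OF grI] hi(2) pI] unfolding g_def .
  have "\<forall>y\<in>H. B g y = 0"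
  proof
    fix y assume y: "y \<in> H"
    then show "B g y = 0" unfolding g_def using BdiffL[OF iA _ , of p y] p IpA HA y unfolding \<alpha>_def
      by (auto simp: subsetD)
  qed
  then have "g \<in> Gp" unfolding Gp_def using gI by blast
  moreover have "x = g + h + p" unfolding g_def i_def by simp
  ultimately show ?thesis using hi p by blast
qed

lemma dec_unique:
  assumes "g \<in> Gp" "h \<in> H" "p \<in> Ip" "g' \<in> Gp" "h' \<in> H" "p' \<in> Ip" "g + h + p = g' + h' + p'"
  shows "g = g' \<and> h = h' \<and> p = p'"
proof -
  have sI: "V.subspace I" using gr_sub[OF grI] .
  have gpI: "g \<in> I" "g' \<in> I" "p \<in> I" "p' \<in> I" using assms GpI Ip_sub_I by auto
  have "h - h' = (g' - g) + (p' - p)" using assms(7) by (simp add: algebra_simps)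
  moreover have "(g' - g) + (p' - p) \<in> I" using gpI V.subspace_diff[OF sI] V.subspace_add[OF sI] by blast
  ultimately have "h - h' \<in> I" by simp
  moreover have "h - h' \<in> H" using V.subspace_diff[OF gr_sub[OF grH]] assms by blast
  ultimately have "h - h' \<in> I \<inter> H" by blast
  then have "h - h' = 0" using IH0 by blast
  then have hh: "h = h'" by simp
  have pp: "p - p' = g' - g" using assms(7) hh by (simp add: algebra_simps)
  have "p - p' \<in> Ip" using V.subspace_diff[OF gr_sub[OF grIp]] assms by blast
  moreover have "\<forall>y\<in>H. B (p - p') y = 0"
  proof
    fix y assume y: "y \<in> H"
    have "B (g' - g) y = B g' y - B g y" using BdiffL assms GpI IA HA y by (meson subsetD)
    then show "B (p - p') y = 0" using pp Gp_left assms y by simp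
  qed
  ultimately have "p - p' = 0" using Ip_unique by blast
  then show ?thesis using hh pp by simp
qed

definition "dec x = (THE t. fst t \<in> Gp \<and> fst (snd t) \<in> H \<and> snd (snd t) \<in> Ip \<and> x = fst t + fst (snd t) + snd (snd t))"
definition "piG x = fst (dec x)"
definition "piH x = fst (snd (dec x))"
definition "piP x = snd (snd (dec x))"

lemma dec_char: assumes "g \<in> Gp" "h \<in> H" "p \<in> Ip" "x = g + h + p" shows "dec x = (g, h, p)"
  unfolding dec_def
proof (rule the_equality)
  show "fst (g, h, p) \<in> Gp \<and> fst (snd (g, h, p)) \<in> H \<and> snd (snd (g, h, p)) \<in> Ip \<and>
        x = fst (g, h, p) + fst (snd (g, h, p)) + snd (snd (g, h, p))" using assms by simp
next
  fix t :: "'v \<times> 'v \<times> 'v"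
  assume "fst t \<in> Gp \<and> fst (snd t) \<in> H \<and> snd (snd t) \<in> Ip \<and> x = fst t + fst (snd t) + snd (snd t)"
  then show "t = (g, h, p)" using dec_unique[of "fst t" "fst (snd t)" "snd (snd t)" g h p] assms
    by (metis prod.collapse)
qed

lemma dec_eq: "g \<in> Gp \<Longrightarrow> h \<in> H \<Longrightarrow> p \<in> Ip \<Longrightarrow> piG (g + h + p) = g \<and> piH (g + h + p) = h \<and> piP (g + h + p) = p"
  unfolding piG_def piH_def piP_def using dec_char by simp

lemma dec_props: assumes x: "x \<in> A" shows "piG x \<in> Gp" "piH x \<in> H" "piP x \<in> Ip" "x = piG x + piH x + piP x"
proof -
  obtain g h p where ghp: "g \<in> Gp" "h \<in> H" "p \<in> Ip" "x = g + h + p" using dec_exists[OF x] by blast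
  then have "piG x = g" "piH x = h" "piP x = p" using dec_eq by auto
  then show "piG x \<in> Gp" "piH x \<in> H" "piP x \<in> Ip" "x = piG x + piH x + piP x" using ghp by auto
qed

lemma GpA: "Gp \<subseteq> A" using GpI IA by auto
lemma sGp: "V.subspace Gp" using gr_sub[OF grGp] .
lemma sH: "V.subspace H" using gr_sub[OF grH] .
lemma sIp: "V.subspace Ip" using gr_sub[OF grIp] .

lemma dec_add: assumes "x \<in> A" "y \<in> A"
  shows "piG (x + y) = piG x + piG y \<and> piH (x + y) = piH x + piH y \<and> piP (x + y) = piP x + piP y"
proof -
  have "x + y = (piG x + piG y) + (piH x + piH y) + (piP x + piP y)"
    using dec_props(4)[OF assms(1)] dec_props(4)[OF assms(2)] by (metis (no_types, lifting) add.assoc add.left_commute)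
  moreover have "piG x + piG y \<in> Gp" "piH x + piH y \<in> H" "piP x + piP y \<in> Ip"
    using dec_props assms V.subspace_add[OF sGp] V.subspace_add[OF sH] V.subspace_add[OF sIp] by auto
  ultimately show ?thesis using dec_eq by metis
qed

lemma dec_sc: assumes "x \<in> A"
  shows "piG (sc c x) = sc c (piG x) \<and> piH (sc c x) = sc c (piH x) \<and> piP (sc c x) = sc c (piP x)"
proof -
  have "sc c x = sc c (piG x) + sc c (piH x) + sc c (piP x)"
    using dec_props(4)[OF assms] by (metis V.scale_right_distrib)
  moreover have "sc c (piG x) \<in> Gp" "sc c (piH x) \<in> H" "sc c (piP x) \<in> Ip"
    using dec_props assms V.subspace_scale[OF sGp] V.subspace_scale[OF sH] V.subspace_scale[OF sIp] by auto
  ultimately show ?thesis using dec_eq by metis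
qed

lemma dec_V0: assumes "x \<in> V0" shows "piG x \<in> V0" "piH x \<in> V0" "piP x \<in> V0"
proof -
  have xA: "x \<in> A" using assms V0A by auto
  note d = dec_props[OF xA]
  have gA: "piG x \<in> A" "piH x \<in> A" "piP x \<in> A" using d GpA HA IpA by auto
  have "x = ev x" using ev_V0[OF assms] by simp
  also have "\<dots> = ev (piG x) + ev (piH x) + ev (piP x)"
    using d(4) ev_add gA Aadd by metis
  finally have e: "x = ev (piG x) + ev (piH x) + ev (piP x)" .
  have "ev (piG x) \<in> Gp" "ev (piH x) \<in> H" "ev (piP x) \<in> Ip"
    using gr_ev grGp grH grIp d by blast+
  then have "piG x = ev (piG x)" "piH x = ev (piH x)" "piP x = ev (piP x)" using dec_eq e by metis+
  then show "piG x \<in> V0" "piH x \<in> V0" "piP x \<in> V0" using ev_props gA by metis+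
qed

lemma dec_V1: assumes "x \<in> V1" shows "piG x \<in> V1" "piH x \<in> V1" "piP x \<in> V1"
proof -
  have xA: "x \<in> A" using assms V1A by auto
  note d = dec_props[OF xA]
  have gA: "piG x \<in> A" "piH x \<in> A" "piP x \<in> A" using d GpA HA IpA by auto
  have "x = x - ev x" using ev_V1[OF assms] by simp
  also have "\<dots> = (piG x - ev (piG x)) + (piH x - ev (piH x)) + (piP x - ev (piP x))"
    using d(4) ev_add gA Aadd by (metis (no_types, lifting) add_diff_add)
  finally have e: "x = (piG x - ev (piG x)) + (piH x - ev (piH x)) + (piP x - ev (piP x))" .
  have "piG x - ev (piG x) \<in> Gp" "piH x - ev (piH x) \<in> H" "piP x - ev (piP x) \<in> Ip"
    using gr_od grGp grH grIp d by blast+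
  then have "piG x = piG x - ev (piG x)" "piH x = piH x - ev (piH x)" "piP x = piP x - ev (piP x)"
    using dec_eq e by metis+
  then show "piG x \<in> V1" "piH x \<in> V1" "piP x \<in> V1" using ev_props gA by metis+
qed

lemma B_piG: assumes g: "g \<in> Gp" and z: "z \<in> A" shows "B g (piG z) = B g z"
proof -
  note d = dec_props[OF z]
  have "B g z = B g (piG z) + B g (piH z) + B g (piP z)"
    using d BaddR GpA HA IpA g Aadd by (metis subsetD)
  moreover have "B g (piH z) = 0" using Gp_left g d by blast
  moreover have "B g (piP z) = 0" using Ip_right d GpI g by blast
  ultimately show ?thesis by simp
qed

lemma dec_G: "g \<in> Gp \<Longrightarrow> piG g = g \<and> piH g = 0 \<and> piP g = 0"
  using dec_eq[of g 0 0] V.subspace_0[OF sH] V.subspace_0[OF sIp] by simp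
lemma dec_H: "h \<in> H \<Longrightarrow> piG h = 0 \<and> piH h = h \<and> piP h = 0"
  using dec_eq[of 0 h 0] V.subspace_0[OF sGp] V.subspace_0[OF sIp] by simp
lemma dec_P: "p \<in> Ip \<Longrightarrow> piG p = 0 \<and> piH p = 0 \<and> piP p = p"
  using dec_eq[of 0 0 p] V.subspace_0[OF sGp] V.subspace_0[OF sH] by simp

end

context ctx begin

definition "BsA = (SOME Bs. finite Bs \<and> Bs \<subseteq> A \<and> A \<subseteq> V.span Bs)"
lemma BsA: "finite BsA" "BsA \<subseteq> A" "A \<subseteq> V.span BsA"
  using someI_ex[OF finA] unfolding BsA_def by blast+

definition "bsl = (SOME l. set l = BsA)"
lemma bsl: "set bsl = BsA" unfolding bsl_def using someI_ex[OF finite_list[OF BsA(1)]] .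

definition "emb g = (\<lambda>i. if i < length bsl then B g (bsl ! i) else 0)"
definition "\<alpha>f p = (\<lambda>y. if y \<in> H then B p y else 0)"
definition "phi x = (emb (piG x), piH x, \<alpha>f (piP x))"
definition "G0 = emb ` (Gp \<inter> V0)"
definition "G1 = emb ` (Gp \<inter> V1)"
definition "Bg u v = B (inv_into Gp emb u) (inv_into Gp emb v)"
definition "MG as = piG (M as)"
definition "Mg us = emb (piG (M (map (inv_into Gp emb) us)))"
definition "Md ds = phi (M (map (inv_into A phi) ds))"
definition "W0 = dpart sc V0 V1 H G0 G1 False"
definition "W1 = dpart sc V0 V1 H G0 G1 True"

lemma bslA: "i < length bsl \<Longrightarrow> bsl ! i \<in> A" using bsl BsA(2) nth_mem by blast

lemma emb_add: "x \<in> A \<Longrightarrow> y \<in> A \<Longrightarrow> emb (x + y) = emb x + emb y"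
  unfolding emb_def by (rule ext) (simp add: BaddL bslA)
lemma emb_sc: "x \<in> A \<Longrightarrow> emb (sc c x) = scG c (emb x)"
  unfolding emb_def scG_def by (rule ext) (simp add: BscL bslA)
lemma emb_0: "emb 0 = 0"
  unfolding emb_def by (rule ext) (simp add: B0L bslA)
lemma emb_diff: "x \<in> A \<Longrightarrow> y \<in> A \<Longrightarrow> emb (x - y) = emb x - emb y"
  using emb_add[of "x - y" y] Adiff by (simp add: algebra_simps)

lemma emb_zero: assumes x: "x \<in> A" and e: "emb x = 0" shows "x = 0"
proof -
  have b: "\<forall>b\<in>BsA. B x b = 0"
  proof
    fix b assume "b \<in> BsA"
    then have "b \<in> set bsl" using bsl by simp
    then obtain i where i: "i < length bsl" "bsl ! i = b" by (auto simp: in_set_conv_nth)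
    have "emb x i = 0" using e by simp
    then show "B x b = 0" using i unfolding emb_def by simp
  qed
  have "V.subspace {w \<in> A. B x w = 0}"
    unfolding V.subspace_def
  proof (intro conjI ballI allI)
    show "0 \<in> {w \<in> A. B x w = 0}" using A0 B0R[OF x] by simp
  next
    fix u v assume "u \<in> {w \<in> A. B x w = 0}" "v \<in> {w \<in> A. B x w = 0}"
    then show "u + v \<in> {w \<in> A. B x w = 0}" using Aadd BaddR[OF _ _ x, of u v] by simp
  next
    fix c u assume "u \<in> {w \<in> A. B x w = 0}"
    then show "sc c u \<in> {w \<in> A. B x w = 0}" using Asc BscR[OF _ x, of u c] by simp
  qed
  moreover have "BsA \<subseteq> {w \<in> A. B x w = 0}" using b BsA(2) by blast
  ultimately have "V.span BsA \<subseteq> {w \<in> A. B x w = 0}" using V.span_minimal by blast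
  then have "\<forall>w\<in>A. B x w = 0" using BsA(3) by blast
  then show ?thesis using nd x unfolding nondeg_on_def by blast
qed

lemma emb_inj: "inj_on emb A"
proof (rule inj_onI)
  fix x y assume "x \<in> A" "y \<in> A" "emb x = emb y"
  then have "emb (x - y) = 0" using emb_diff by simp
  then have "x - y = 0" using emb_zero Adiff \<open>x \<in> A\<close> \<open>y \<in> A\<close> by blast
  then show "x = y" by simp
qed

lemma emb_inj_Gp: "inj_on emb Gp" using inj_on_subset[OF emb_inj GpA] .

lemma Bg_emb: "x \<in> Gp \<Longrightarrow> y \<in> Gp \<Longrightarrow> Bg (emb x) (emb y) = B x y"
  unfolding Bg_def using inv_into_f_f[OF emb_inj_Gp] by simp

lemma \<alpha>f_add: assumes pq: "p \<in> A" "q \<in> A" shows "\<alpha>f (p + q) = \<alpha>f p + \<alpha>f q"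
proof (rule ext)
  fix y
  show "\<alpha>f (p + q) y = (\<alpha>f p + \<alpha>f q) y"
  proof (cases "y \<in> H")
    case True
    then have yA: "y \<in> A" using HA by blast
    show ?thesis using True BaddL[OF pq yA] unfolding \<alpha>f_def by simp
  next
    case False then show ?thesis unfolding \<alpha>f_def by simp
  qed
qed
lemma \<alpha>f_sc: assumes p: "p \<in> A" shows "\<alpha>f (sc c p) = (\<lambda>v. c * \<alpha>f p v)"
proof (rule ext)
  fix y
  show "\<alpha>f (sc c p) y = c * \<alpha>f p y"
  proof (cases "y \<in> H")
    case True
    then have yA: "y \<in> A" using HA by blast
    show ?thesis using True BscL[OF p yA] unfolding \<alpha>f_def by simp
  next
    case False then show ?thesis unfolding \<alpha>f_def by simp
  qed
qed
lemma \<alpha>f_0: "\<alpha>f 0 = 0"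
proof (rule ext)
  fix y
  show "\<alpha>f 0 y = 0 y"
  proof (cases "y \<in> H")
    case True
    then have yA: "y \<in> A" using HA by blast
    show ?thesis using True B0L[OF yA] unfolding \<alpha>f_def by simp
  next
    case False then show ?thesis unfolding \<alpha>f_def by simp
  qed
qed

lemma \<alpha>f_inj: assumes "p \<in> Ip" "q \<in> Ip" "\<alpha>f p = \<alpha>f q" shows "p = q"
proof -
  have "\<forall>x\<in>H. B (p - q) x = 0"
  proof
    fix x assume x: "x \<in> H"
    have "B p x = B q x" using fun_cong[OF assms(3), of x] x unfolding \<alpha>f_def by simp
    then show "B (p - q) x = 0" using BdiffL assms IpA HA x by (metis subsetD right_minus_eq)
  qed
  moreover have "p - q \<in> Ip" using V.subspace_diff[OF sIp] assms by blast
  ultimately show ?thesis using Ip_unique by fastforce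
qed

lemma \<alpha>f_hdual: assumes "p \<in> Ip" "p \<in> par_part V0 V1 q" shows "\<alpha>f p \<in> hdual_par sc V0 V1 H q"
proof -
  have pA: "p \<in> A" using assms IpA by auto
  have "\<alpha>f p \<in> hdual sc H" unfolding hdual_def \<alpha>f_def
    using BaddR BscR pA HA V.subspace_add[OF sH] V.subspace_scale[OF sH] by (auto simp: subsetD)
  moreover have "\<forall>x\<in>H \<inter> par_part V0 V1 (\<not> q). \<alpha>f p x = 0"
    using assms evB unfolding \<alpha>f_def par_part_def by (cases q) auto
  ultimately show ?thesis unfolding hdual_par_def by blast
qed

lemma \<alpha>f_eq: assumes "\<alpha> \<in> hdual sc H" "\<forall>x\<in>H. B p x = \<alpha> x" shows "\<alpha>f p = \<alpha>"
  unfolding \<alpha>f_def using assms hdual_out by (intro ext) auto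

lemma phi_add: "x \<in> A \<Longrightarrow> y \<in> A \<Longrightarrow> phi (x + y) = phi x + phi y"
proof -
  assume xy: "x \<in> A" "y \<in> A"
  note a = dec_add[OF xy]
  have "emb (piG (x + y)) = emb (piG x) + emb (piG y)" using a emb_add dec_props xy GpA by (metis subsetD)
  moreover have "\<alpha>f (piP (x + y)) = \<alpha>f (piP x) + \<alpha>f (piP y)" using a \<alpha>f_add dec_props xy IpA by (metis subsetD)
  ultimately show ?thesis unfolding phi_def using a by simp
qed

lemma phi_sc: "x \<in> A \<Longrightarrow> phi (sc c x) = scD sc c (phi x)"
proof -
  assume x: "x \<in> A"
  note a = dec_sc[OF x, of c]
  have "emb (piG (sc c x)) = scG c (emb (piG x))" using a emb_sc dec_props x GpA by (metis subsetD)
  moreover have "\<alpha>f (piP (sc c x)) = (\<lambda>v. c * \<alpha>f (piP x) v)" using a \<alpha>f_sc dec_props x IpA by (metis subsetD)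
  ultimately show ?thesis unfolding phi_def scD_def using a by simp
qed

lemma phi_inj: "inj_on phi A"
proof (rule inj_onI)
  fix x y assume xy: "x \<in> A" "y \<in> A" "phi x = phi y"
  have "emb (piG x) = emb (piG y)" "piH x = piH y" "\<alpha>f (piP x) = \<alpha>f (piP y)"
    using xy(3) unfolding phi_def by auto
  then have "piG x = piG y" "piH x = piH y" "piP x = piP y"
    using emb_inj_Gp \<alpha>f_inj dec_props xy by (metis inj_onD)+
  then show "x = y" using dec_props(4) xy by metis
qed

lemma phi_G: "g \<in> Gp \<Longrightarrow> phi g = (emb g, 0, 0)"
  unfolding phi_def using dec_G \<alpha>f_0 by simp
lemma phi_H: "h \<in> H \<Longrightarrow> phi h = (0, h, 0)"
  unfolding phi_def using dec_H \<alpha>f_0 emb_0 by simp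
lemma phi_P: "p \<in> Ip \<Longrightarrow> phi p = (0, 0, \<alpha>f p)"
  unfolding phi_def using dec_P emb_0 by simp

lemma ssumG: "ssum G0 G1 = emb ` Gp"
proof -
  have "ssum (emb ` (Gp \<inter> V0)) (emb ` (Gp \<inter> V1)) = emb ` ssum (Gp \<inter> V0) (Gp \<inter> V1)"
  proof (rule ssum_image)
    have "ssum (Gp \<inter> V0) (Gp \<inter> V1) = Gp" using gr_graded[OF grGp] unfolding graded_subspace_def by blast
    then show "\<forall>x\<in>ssum (Gp \<inter> V0) (Gp \<inter> V1). \<forall>y\<in>ssum (Gp \<inter> V0) (Gp \<inter> V1). emb (x + y) = emb x + emb y"
      using emb_add GpA by (auto simp: subsetD)
    show "0 \<in> Gp \<inter> V0" "0 \<in> Gp \<inter> V1" using V.subspace_0 sGp sub0 sub1 by auto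
  qed
  moreover have "ssum (Gp \<inter> V0) (Gp \<inter> V1) = Gp" using gr_graded[OF grGp] unfolding graded_subspace_def by blast
  ultimately show ?thesis unfolding G0_def G1_def by simp
qed

lemma phi_V: "phi ` par_part V0 V1 q = dpart sc V0 V1 H G0 G1 q"
proof
  show "phi ` par_part V0 V1 q \<subseteq> dpart sc V0 V1 H G0 G1 q"
  proof
    fix d assume "d \<in> phi ` par_part V0 V1 q"
    then obtain x where x: "x \<in> par_part V0 V1 q" "d = phi x" by auto
    have xA: "x \<in> A" using x ppA by auto
    note dp = dec_props[OF xA]
    have par: "piG x \<in> par_part V0 V1 q" "piH x \<in> par_part V0 V1 q" "piP x \<in> par_part V0 V1 q"
      using x dec_V0 dec_V1 unfolding par_part_def by (cases q; simp)+
    have "emb (piG x) \<in> par_part G0 G1 q" using par dp unfolding G0_def G1_def par_part_def by (cases q) auto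
    moreover have "piH x \<in> H \<inter> par_part V0 V1 q" using par dp by auto
    moreover have "\<alpha>f (piP x) \<in> hdual_par sc V0 V1 H q" using \<alpha>f_hdual par dp by blast
    ultimately show "d \<in> dpart sc V0 V1 H G0 G1 q" unfolding dpart_def x(2) phi_def by simp
  qed
next
  show "dpart sc V0 V1 H G0 G1 q \<subseteq> phi ` par_part V0 V1 q"
  proof
    fix d assume dd: "d \<in> dpart sc V0 V1 H G0 G1 q"
    obtain g x \<alpha> where d0: "d = (g, x, \<alpha>)" by (cases d) blast
    have d: "d = (g, x, \<alpha>)" "g \<in> par_part G0 G1 q" "x \<in> H \<inter> par_part V0 V1 q"
      "\<alpha> \<in> hdual_par sc V0 V1 H q" using dd unfolding d0 dpart_def by simp_all
    have "g \<in> emb ` (Gp \<inter> par_part V0 V1 q)"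
      using d(2) unfolding G0_def G1_def par_part_def by (cases q) simp_all
    then obtain g0 where g0: "g0 \<in> Gp" "g0 \<in> par_part V0 V1 q" "g = emb g0" by blast
    obtain p where p: "p \<in> Ip" "p \<in> par_part V0 V1 q" "\<forall>y\<in>H. B p y = \<alpha> y"
      using riesz_H_par[OF d(4)] by blast
    have a1: "\<alpha> \<in> hdual sc H" using d(4) unfolding hdual_par_def by blast
    define z where "z = g0 + x + p"
    have sp: "V.subspace (par_part V0 V1 q)" using sub0 sub1 unfolding par_part_def by (cases q) auto
    have "z \<in> par_part V0 V1 q" unfolding z_def using V.subspace_add[OF sp] g0 d(3) p by blast
    moreover have "phi z = d"
    proof -
      have e: "piG z = g0" "piH z = x" "piP z = p" using dec_eq[of g0 x p] g0(1) d(3) p(1) unfolding z_def by auto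
      show ?thesis unfolding phi_def e d(1) g0(3) \<alpha>f_eq[OF a1 p(3)] by simp
    qed
    ultimately show "d \<in> phi ` par_part V0 V1 q" by (metis image_eqI)
  qed
qed

lemma phi_V0: "phi ` V0 = W0" using phi_V[of False] unfolding W0_def par_part_def by simp
lemma phi_V1: "phi ` V1 = W1" using phi_V[of True] unfolding W1_def par_part_def by simp

lemma formD_eval: "formD V0 V1 Bg (g1, x1, a1) (g2, x2, a2) = Bg g1 g2 + a1 x2 - a2 (ev x1) + a2 (x1 - ev x1)"
  unfolding formD_def ev_def by (simp add: Let_def)

lemma phi_iso: assumes x: "x \<in> A" and y: "y \<in> A" shows "formD V0 V1 Bg (phi x) (phi y) = B x y"
proof -
  note dx = dec_props[OF x] and dy = dec_props[OF y]
  define g1 h1 p1 g2 h2 p2 where "g1 = piG x" "h1 = piH x" "p1 = piP x" "g2 = piG y" "h2 = piH y" "p2 = piP y"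
  have m: "g1 \<in> Gp" "h1 \<in> H" "p1 \<in> Ip" "g2 \<in> Gp" "h2 \<in> H" "p2 \<in> Ip"
    using dx dy unfolding g1_h1_p1_g2_h2_p2_def by auto
  have mA: "g1 \<in> A" "h1 \<in> A" "p1 \<in> A" "g2 \<in> A" "h2 \<in> A" "p2 \<in> A" using m GpA HA IpA by auto
  have mI: "g1 \<in> I" "g2 \<in> I" "p1 \<in> I" "p2 \<in> I" using m GpI Ip_sub_I by auto
  have eh: "ev h1 \<in> H" "ev h1 \<in> par_part V0 V1 False" "h1 - ev h1 \<in> H" "h1 - ev h1 \<in> par_part V0 V1 True"
    using gr_ev[OF grH m(2)] gr_od[OF grH m(2)] unfolding par_part_def by auto
  have LHS: "formD V0 V1 Bg (phi x) (phi y) = B g1 g2 + B p1 h2 - B p2 (ev h1) + B p2 (h1 - ev h1)"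
    unfolding phi_def formD_eval g1_h1_p1_g2_h2_p2_def[symmetric] using Bg_emb m eh unfolding \<alpha>f_def by simp
  have xs: "x = g1 + h1 + p1" "y = g2 + h2 + p2" using dx dy unfolding g1_h1_p1_g2_h2_p2_def by auto
  have ex1: "B x y = B g1 y + B h1 y + B p1 y"
    unfolding xs(1) using BaddL mA y Aadd by metis
  have "B g1 y = B g1 g2 + B g1 h2 + B g1 p2" unfolding xs(2) using BaddR mA Aadd by metis
  moreover have "B g1 h2 = 0" "B g1 p2 = 0" using Gp_left Ip_right m mI by auto
  ultimately have t1: "B g1 y = B g1 g2" by simp
  have "B h1 y = B h1 g2 + B h1 h2 + B h1 p2" unfolding xs(2) using BaddR mA Aadd by metis
  moreover have "B h1 g2 = 0" "B h1 h2 = 0" using Gp_right H_iso m by auto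
  moreover have "B h1 p2 = B (ev h1) p2 + B (h1 - ev h1) p2"
    using BaddL[OF ev_A[OF mA(2)] od_A[OF mA(2)] mA(6)] by simp
  moreover have "B (ev h1) p2 = - B p2 (ev h1)" using skew1'[OF mA(6) eh(2)] unfolding psign_def by simp
  moreover have "B (h1 - ev h1) p2 = B p2 (h1 - ev h1)" using skew1'[OF mA(6) eh(4)] unfolding psign_def by simp
  ultimately have t2: "B h1 y = - B p2 (ev h1) + B p2 (h1 - ev h1)" by simp
  have "B p1 y = B p1 g2 + B p1 h2 + B p1 p2" unfolding xs(2) using BaddR mA Aadd by metis
  moreover have "B p1 g2 = 0" "B p1 p2 = 0" using Ip_left m mI by auto
  ultimately have t3: "B p1 y = B p1 h2" by simp
  show ?thesis using LHS ex1 t1 t2 t3 by simp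
qed

lemma Md_map: "length as = n \<Longrightarrow> set as \<subseteq> A \<Longrightarrow> Md (map phi as) = phi (M as)"
  unfolding Md_def using inv_into_f_f[OF phi_inj] by (simp add: map_idI subsetD)

lemma Mg_map: "length as = n \<Longrightarrow> set as \<subseteq> Gp \<Longrightarrow> Mg (map emb as) = emb (MG as)"
  unfolding Mg_def MG_def using inv_into_f_f[OF emb_inj_Gp] by (simp add: map_idI subsetD)

lemma d_alg: "comm_inv_superalg (scD sc) W0 W1 n (formD V0 V1 Bg) Md"
proof (rule transport[OF vs vs_scD[OF vs] ci _ _ phi_V0[symmetric] phi_V1[symmetric] _ n1])
  show "\<forall>x\<in>ssum V0 V1. \<forall>y\<in>ssum V0 V1. \<forall>c. phi (x + y) = phi x + phi y \<and> phi (sc c x) = scD sc c (phi x)"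
    using phi_add phi_sc unfolding A_def by blast
  show "inj_on phi (ssum V0 V1)" using phi_inj unfolding A_def .
  show "\<forall>x\<in>ssum V0 V1. \<forall>y\<in>ssum V0 V1. formD V0 V1 Bg (phi x) (phi y) = B x y"
    using phi_iso unfolding A_def by blast
  show "\<forall>as. length as = n \<and> set as \<subseteq> ssum V0 V1 \<longrightarrow> Md (map phi as) = phi (M as)"
    using Md_map unfolding A_def by blast
qed

lemma ssGp: "ssum (Gp \<inter> V0) (Gp \<inter> V1) = Gp" using gr_graded[OF grGp] unfolding graded_subspace_def by blast

lemma Gp_alg: "comm_inv_superalg sc (Gp \<inter> V0) (Gp \<inter> V1) n B MG"
proof -
  have ss: "superspace sc (Gp \<inter> V0) (Gp \<inter> V1)"
    unfolding superspace_def ssGp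
  proof (intro conjI)
    show "V.subspace (Gp \<inter> V0)" "V.subspace (Gp \<inter> V1)" using V.subspace_inter sGp sub0 sub1 by auto
    show "Gp \<inter> V0 \<inter> (Gp \<inter> V1) = {0}" using int01 V.subspace_0[OF sGp] by auto
    obtain E where E: "E \<subseteq> Gp" "V.independent E" "Gp \<subseteq> V.span E"
      by (rule V.basis_exists[of Gp]) blast
    have "E \<subseteq> V.span BsA" using E GpA BsA by blast
    then have "finite E" using V.independent_span_bound[OF BsA(1) E(2)] by blast
    then show "\<exists>Bs. finite Bs \<and> Bs \<subseteq> Gp \<and> Gp \<subseteq> V.span Bs" using E by blast
  qed
  have ppG: "par_part (Gp \<inter> V0) (Gp \<inter> V1) p \<subseteq> par_part V0 V1 p" for p unfolding par_part_def by auto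
  have bilG: "bilinear_on sc Gp B" using bil GpA unfolding bilinear_on_def by (meson subsetD)
  have ndG: "nondeg_on B Gp"
    unfolding nondeg_on_def
  proof (intro ballI impI)
    fix x assume x: "x \<in> Gp" and h: "\<forall>y\<in>Gp. B x y = 0"
    have "\<forall>z\<in>A. B x z = 0" using B_piG[OF x] h dec_props by metis
    then show "x = 0" using nd x GpA unfolding nondeg_on_def by blast
  qed
  have sfG: "super_form sc (Gp \<inter> V0) (Gp \<inter> V1) B"
    unfolding super_form_def ssGp using bilG ndG evB sk ppG by blast
  have naG: "nary_on sc Gp n MG"
    unfolding nary_on_def MG_def
  proof (intro conjI allI impI)
    fix as :: "'v list" assume "length as = n \<and> set as \<subseteq> Gp"
    then have "M as \<in> A" using Mcl[of as] GpA by auto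
    then show "piG (M as) \<in> Gp" using dec_props by blast
  next
    fix as :: "'v list" and i x y c assume h: "length as = n \<and> set as \<subseteq> Gp \<and> i < n \<and> x \<in> Gp \<and> y \<in> Gp"
    have hA: "set as \<subseteq> A" "x \<in> A" "y \<in> A" using h GpA by auto
    have l: "length as = n" "i < n" using h by auto
    have MA: "M (as[i := x]) \<in> A" "M (as[i := y]) \<in> A" using Mcl set_upd_A hA l by simp_all
    have "M (as[i := x + y]) = M (as[i := x]) + M (as[i := y])" by (rule Madd[OF l(1) hA(1) l(2) hA(2,3)])
    then show "piG (M (as[i := x + y])) = piG (M (as[i := x])) + piG (M (as[i := y]))"
      using dec_add[OF MA] by simp
    have "M (as[i := sc c x]) = sc c (M (as[i := x]))" by (rule Msc[OF l(1) hA(1) l(2) hA(2)])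
    then show "piG (M (as[i := sc c x])) = sc c (piG (M (as[i := x])))"
      using dec_sc[OF MA(1)] by simp
  qed
  have cmG: "commutative_nary sc (Gp \<inter> V0) (Gp \<inter> V1) n MG"
    unfolding commutative_nary_def ssGp MG_def
  proof (intro allI impI)
    fix as :: "'v list" and i p q x y
    assume h: "length as = n \<and> set as \<subseteq> Gp \<and> Suc i < n \<and> x \<in> par_part (Gp \<inter> V0) (Gp \<inter> V1) p \<and>
      y \<in> par_part (Gp \<inter> V0) (Gp \<inter> V1) q"
    have hh1: "x \<in> par_part V0 V1 p" "y \<in> par_part V0 V1 q" using h ppG by blast+
    have hh: "x \<in> par_part V0 V1 p" "y \<in> par_part V0 V1 q" "set as \<subseteq> A" "x \<in> A" "y \<in> A"
      using hh1 h GpA ppA by blast+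
    have l: "length as = n" "Suc i < n" using h by auto
    have "M (as[i := x, Suc i := y]) = sc (psign p q) (M (as[i := y, Suc i := x]))"
      by (rule cmD[OF l(1) hh(3) l(2) hh(1,2)])
    moreover have "M (as[i := y, Suc i := x]) \<in> A" using Mcl set_upd_A hh l by simp
    ultimately show "piG (M (as[i := x, Suc i := y])) = sc (psign p q) (piG (M (as[i := y, Suc i := x])))"
      using dec_sc by simp
  qed
  have ivG: "invariant_nary (Gp \<inter> V0) (Gp \<inter> V1) n B MG"
    unfolding invariant_nary_def ssGp MG_def
  proof (intro allI impI)
    fix a0 a1 rest p q
    assume h: "a0 \<in> par_part (Gp \<inter> V0) (Gp \<inter> V1) p \<and> a1 \<in> par_part (Gp \<inter> V0) (Gp \<inter> V1) q \<and>
      length rest = n - 1 \<and> set rest \<subseteq> Gp"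
    have a: "a0 \<in> Gp" "a1 \<in> Gp" using h unfolding par_part_def by (auto split: if_splits)
    have hh: "a0 \<in> par_part V0 V1 p" "a1 \<in> par_part V0 V1 q" "set rest \<subseteq> A" using h ppG GpA by blast+
    have l: "length (a1 # rest) = n" "length (a0 # rest) = n" using h n1 by auto
    have sA: "set (a1 # rest) \<subseteq> A" "set (a0 # rest) \<subseteq> A" using hh a GpA by auto
    have "B a0 (M (a1 # rest)) = psign p q * B a1 (M (a0 # rest))" by (rule ivD[OF hh(1,2) _ hh(3)]) (use h in simp)
    then show "B a0 (piG (M (a1 # rest))) = psign p q * B a1 (piG (M (a0 # rest)))"
      using B_piG a Mcl l sA by simp
  qed
  show ?thesis unfolding comm_inv_superalg_def using ss sfG naG cmG ivG ssGp by simp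
qed

lemma g_alg: "comm_inv_superalg scG G0 G1 n Bg Mg"
proof (rule transport[OF vs vs_scG Gp_alg _ _ G0_def G1_def _ n1])
  show "\<forall>x\<in>ssum (Gp \<inter> V0) (Gp \<inter> V1). \<forall>y\<in>ssum (Gp \<inter> V0) (Gp \<inter> V1). \<forall>c.
      emb (x + y) = emb x + emb y \<and> emb (sc c x) = scG c (emb x)"
    unfolding ssGp using emb_add emb_sc GpA by (auto simp: subsetD)
  show "inj_on emb (ssum (Gp \<inter> V0) (Gp \<inter> V1))" unfolding ssGp by (rule emb_inj_Gp)
  show "\<forall>x\<in>ssum (Gp \<inter> V0) (Gp \<inter> V1). \<forall>y\<in>ssum (Gp \<inter> V0) (Gp \<inter> V1). Bg (emb x) (emb y) = B x y"
    unfolding ssGp using Bg_emb by blast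
  show "\<forall>as. length as = n \<and> set as \<subseteq> ssum (Gp \<inter> V0) (Gp \<inter> V1) \<longrightarrow> Mg (map emb as) = emb (MG as)"
    unfolding ssGp using Mg_map by blast
qed

end

lemma count_card: "count_list xs a = card {i. i < length xs \<and> xs ! i = a}"
  unfolding count_list_eq_length_filter length_filter_conv_card by (metis (full_types))

lemma rest_set: assumes "x \<in> set (take j cs @ drop (Suc j) cs)" shows "\<exists>i<length cs. i \<noteq> j \<and> cs ! i = x"
proof -
  from assms consider "x \<in> set (take j cs)" | "x \<in> set (drop (Suc j) cs)" by auto
  then show ?thesis
  proof cases
    case 1
    then obtain i where "i < length (take j cs)" "take j cs ! i = x" by (auto simp: in_set_conv_nth)
    then show ?thesis by (intro exI[of _ i]) auto
  next
    case 2
    then obtain i where "i < length (drop (Suc j) cs)" "drop (Suc j) cs ! i = x" by (auto simp: in_set_conv_nth)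
    then show ?thesis by (intro exI[of _ "Suc j + i"]) auto
  qed
qed

lemma rest_nth: assumes "k < length cs" "j < length cs" "k \<noteq> j"
  shows "\<exists>k'. k' < length cs - 1 \<and> (take j cs @ drop (Suc j) cs) ! k' = cs ! k"
proof (cases "k < j")
  case True
  then show ?thesis using assms by (intro exI[of _ k]) (auto simp: nth_append)
next
  case False
  then have kj: "j < k" using assms by simp
  have lt: "length (take j cs) = j" using assms by simp
  have nl: "\<not> (k - 1 < length (take j cs))" using kj lt by simp
  have "(take j cs @ drop (Suc j) cs) ! (k - 1) = drop (Suc j) cs ! (k - 1 - length (take j cs))"
    by (rule nth_append_right) (use lt kj in simp)
  then have "(take j cs @ drop (Suc j) cs) ! (k - 1) = drop (Suc j) cs ! (k - 1 - j)" using lt by simp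
  also have "\<dots> = cs ! k" using kj assms by simp
  finally have eq: "(take j cs @ drop (Suc j) cs) ! (k - 1) = cs ! k" .
  show ?thesis
  proof (intro exI conjI)
    show "k - 1 < length cs - 1" using kj assms by simp
    show "(take j cs @ drop (Suc j) cs) ! (k - 1) = cs ! k" by (rule eq)
  qed
qed

lemma rest_len: "j < length cs \<Longrightarrow> length (take j cs @ drop (Suc j) cs) = length cs - 1"
  by simp

context ctx begin

definition "psi i as = (if i < n then formD V0 V1 Bg (hd as) (Md (tl as)) else 0)"
definition "Sb l = (if l = (0::nat) then Gp else if l = 1 then H else Ip)"

lemma Sb_gr: "gr (Sb l)" unfolding Sb_def using grGp grH grIp by auto
lemma Sb_A: "Sb l \<subseteq> A" using gr_A[OF Sb_gr] .
lemma Sb_I: "l \<noteq> 1 \<Longrightarrow> Sb l \<subseteq> I" unfolding Sb_def using GpI Ip_sub_I by auto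

lemma dblock_pre: assumes "l < 3" "d \<in> dblock sc H (ssum G0 G1) l" shows "\<exists>b\<in>Sb l. d = phi b"
proof -
  consider "l = 0" | "l = 1" | "l = 2" using assms(1) by linarith
  then show ?thesis
  proof cases
    case 1
    then obtain g where "g \<in> Gp" "d = (emb g, 0, 0)" using assms(2) unfolding dblock_def ssumG by auto
    then show ?thesis using phi_G 1 unfolding Sb_def by auto
  next
    case 2
    then obtain x where "x \<in> H" "d = (0, x, 0)" using assms(2) unfolding dblock_def by auto
    then show ?thesis using phi_H 2 unfolding Sb_def by auto
  next
    case 3
    then obtain \<alpha> where a: "\<alpha> \<in> hdual sc H" "d = (0, 0, \<alpha>)" using assms(2) unfolding dblock_def by auto
    obtain p where "p \<in> Ip" "\<forall>x\<in>H. B p x = \<alpha> x" using riesz_H[OF a(1)] by blast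
    then show ?thesis using phi_P \<alpha>f_eq[OF a(1)] a 3 unfolding Sb_def by auto
  qed
qed

lemma T_Td: assumes l: "length bs = Suc n" and sA: "set bs \<subseteq> A"
  shows "formD V0 V1 Bg (hd (map phi bs)) (Md (tl (map phi bs))) = T bs"
proof -
  obtain b0 rest where bs: "bs = b0 # rest" using l by (cases bs) auto
  have r: "length rest = n" "set rest \<subseteq> A" "b0 \<in> A" using l sA bs by auto
  have "Md (map phi rest) = phi (M rest)" using Md_map r by blast
  then show ?thesis using phi_iso[OF r(3) Mcl[OF r(1,2)]] bs unfolding T_def by simp
qed

lemma card_parts:
  fixes ls :: "nat list"
  assumes l: "length ls = Suc n" and lt: "\<forall>j<Suc n. ls ! j < 3"
  shows "card {i. i < Suc n \<and> ls ! i = 0} + card {i. i < Suc n \<and> ls ! i = 1} + card {i. i < Suc n \<and> ls ! i = 2} = Suc n"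
proof -
  define Z where "Z a = {i. i < Suc n \<and> ls ! i = a}" for a :: nat
  have fin: "finite (Z a)" for a unfolding Z_def by simp
  have U: "Z 0 \<union> Z 1 \<union> Z 2 = {..<Suc n}"
  proof
    show "Z 0 \<union> Z 1 \<union> Z 2 \<subseteq> {..<Suc n}" unfolding Z_def by auto
    show "{..<Suc n} \<subseteq> Z 0 \<union> Z 1 \<union> Z 2"
    proof
      fix i assume "i \<in> {..<Suc n}"
      then have i: "i < Suc n" "ls ! i < 3" using lt by auto
      then have "ls ! i = 0 \<or> ls ! i = 1 \<or> ls ! i = 2" by linarith
      then show "i \<in> Z 0 \<union> Z 1 \<union> Z 2" unfolding Z_def using i by auto
    qed
  qed
  have d1: "Z 0 \<inter> Z 1 = {}" "(Z 0 \<union> Z 1) \<inter> Z 2 = {}" unfolding Z_def by auto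
  have "card (Z 0 \<union> Z 1 \<union> Z 2) = card (Z 0) + card (Z 1) + card (Z 2)"
    using card_Un_disjoint[OF _ _ d1(2)] card_Un_disjoint[OF _ _ d1(1)] fin by simp
  then show ?thesis using U unfolding Z_def by simp
qed

lemma gde: "gen_double_ext sc V0 V1 n M H G0 G1 Bg Mg Md psi"
  unfolding gen_double_ext_def
proof (intro conjI allI impI)
  show "comm_inv_superalg scG G0 G1 n Bg Mg" by (rule g_alg)
  show "comm_inv_superalg (scD sc) (dpart sc V0 V1 H G0 G1 False) (dpart sc V0 V1 H G0 G1 True) n (formD V0 V1 Bg) Md"
    using d_alg unfolding W0_def W1_def .
next
  fix ls :: "nat list" and as
  assume h: "length ls = Suc n \<and> length as = Suc n \<and>
     (\<forall>j<Suc n. ls ! j < 3 \<and> as ! j \<in> dblock sc H (ssum G0 G1) (ls ! j))"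
  have lls: "length ls = Suc n" and las: "length as = Suc n" and lt: "\<forall>j<Suc n. ls ! j < 3"
    using h by auto
  define bs where "bs = map (inv_into A phi) as"
  have bsj: "bs ! j \<in> Sb (ls ! j) \<and> as ! j = phi (bs ! j)" if j: "j < Suc n" for j
  proof -
    obtain b where b: "b \<in> Sb (ls ! j)" "as ! j = phi b" using dblock_pre h j by blast
    have "b \<in> A" using b Sb_A by blast
    then have "bs ! j = b" unfolding bs_def using j las b inv_into_f_f[OF phi_inj] by simp
    then show ?thesis using b by simp
  qed
  have lbs: "length bs = Suc n" unfolding bs_def using las by simp
  have asbs: "as = map phi bs" using bsj las lbs by (intro nth_equalityI) auto
  have bsA: "set bs \<subseteq> A"
  proof
    fix x assume "x \<in> set bs"
    then obtain j where "j < Suc n" "bs ! j = x" using lbs by (auto simp: in_set_conv_nth)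
    then show "x \<in> A" using bsj Sb_A by blast
  qed
  have TT: "formD V0 V1 Bg (hd as) (Md (tl as)) = T bs" unfolding asbs by (rule T_Td[OF lbs bsA])
  define Z where "Z a = {i. i < Suc n \<and> ls ! i = a}" for a :: nat
  have cnt: "count_list ls a = card (Z a)" for a unfolding count_card Z_def lls ..
  have finZ: "finite (Z a)" for a unfolding Z_def by simp
  have ZS: "Z a \<subseteq> {..<Suc n}" for a unfolding Z_def by auto
  have parts: "card (Z 0) + card (Z 1) + card (Z 2) = Suc n" unfolding Z_def by (rule card_parts[OF lls lt])
  have Zmem: "j \<in> Z a \<longleftrightarrow> j < Suc n \<and> ls ! j = a" for j a unfolding Z_def by simp
  have hdbs: "hd bs = bs ! 0" using lbs by (cases bs) auto
  have "set (tl bs) \<subseteq> set bs" by (cases bs) auto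
  then have tlbs: "length (tl bs) = n" "set (tl bs) \<subseteq> A" using lbs bsA by auto
  have tl_nth: "tl bs ! j = bs ! Suc j" if "j < n" for j using lbs that by (cases bs) auto
  have tl_in: "\<exists>j. j < n \<and> tl bs ! j = x" if "x \<in> set (tl bs)" for x
    using that tlbs by (auto simp: in_set_conv_nth)
  have allZ: "Z a = {..<Suc n}" if "card (Z a) = Suc n" for a
    using card_subset_eq[OF _ ZS[of a]] that by simp
  show "(let cG = count_list ls 0; cH = count_list ls 1; cS = count_list ls 2;
             T = formD V0 V1 Bg (hd as) (Md (tl as)) in
          (cG = Suc n \<longrightarrow> T = Bg (fst (hd as)) (Mg (map fst (tl as)))) \<and>
          (cH = n \<and> cS = 1 \<and> ls ! 0 = 2 \<longrightarrow> T = snd (snd (hd as)) (M (map (fst \<circ> snd) (tl as)))) \<and>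
          (cS = 0 \<and> 1 \<le> cH \<longrightarrow> T = psi cH as) \<and>
          (\<not> (cG = Suc n \<or> (cH = n \<and> cS = 1) \<or> (cS = 0 \<and> 1 \<le> cH)) \<longrightarrow> T = 0))"
    unfolding Let_def cnt TT
  proof (intro conjI impI)
    assume c: "card (Z 0) = Suc n"
    have allG: "bs ! j \<in> Gp" if "j < Suc n" for j
    proof -
      have "j \<in> Z 0" using allZ[OF c] that by simp
      then have "ls ! j = 0" using Zmem by simp
      then show ?thesis using bsj[OF that] unfolding Sb_def by simp
    qed
    have tlG: "set (tl bs) \<subseteq> Gp"
    proof
      fix x assume "x \<in> set (tl bs)"
      then obtain j where "j < n" "tl bs ! j = x" using tl_in by blast
      then show "x \<in> Gp" using tl_nth allG by (metis Suc_less_eq)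
    qed
    have b0: "hd bs \<in> Gp" using allG[of 0] hdbs by simp
    have MA: "M (tl bs) \<in> A" using Mcl tlbs by blast
    have "fst (hd as) = emb (hd bs)" unfolding asbs using lbs b0 phi_G by (cases bs) auto
    moreover have "map fst (tl as) = map emb (tl bs)" unfolding asbs using tlG phi_G by (cases bs) auto
    ultimately have "Bg (fst (hd as)) (Mg (map fst (tl as))) = Bg (emb (hd bs)) (emb (MG (tl bs)))"
      using Mg_map tlbs tlG by simp
    also have "\<dots> = B (hd bs) (piG (M (tl bs)))" using Bg_emb b0 dec_props MA unfolding MG_def by simp
    also have "\<dots> = T bs" using B_piG[OF b0 MA] unfolding T_def by simp
    finally show "T bs = Bg (fst (hd as)) (Mg (map fst (tl as)))" by simp
  next
    assume c: "card (Z 1) = n \<and> card (Z 2) = 1 \<and> ls ! 0 = 2"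
    have "0 \<in> Z 2" using c Zmem by simp
    moreover obtain z where "Z 2 = {z}" using c by (meson card_1_singletonE)
    ultimately have Z2: "Z 2 = {0}" by simp
    have "card (Z 0) = 0" using parts c by simp
    then have Z0: "Z 0 = {}" using finZ by simp
    have oneH: "ls ! j = 1" if "0 < j" "j < Suc n" for j
    proof -
      have "j \<notin> Z 0" "j \<notin> Z 2" using Z0 Z2 that by auto
      then have "ls ! j \<noteq> 0" "ls ! j \<noteq> 2" using Zmem that by auto
      moreover have "ls ! j < 3" using lt that by simp
      ultimately show ?thesis by linarith
    qed
    have b0: "hd bs \<in> Ip" using bsj[of 0] c hdbs unfolding Sb_def by simp
    have tlH: "set (tl bs) \<subseteq> H"
    proof
      fix x assume "x \<in> set (tl bs)"
      then obtain j where "j < n" "tl bs ! j = x" using tl_in by blast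
      then show "x \<in> H" using bsj[of "Suc j"] oneH[of "Suc j"] tl_nth unfolding Sb_def by simp
    qed
    have MH: "M (tl bs) \<in> H" using H_cl tlbs tlH by blast
    have "snd (snd (hd as)) = \<alpha>f (hd bs)" unfolding asbs using lbs b0 phi_P by (cases bs) auto
    moreover have "map (fst \<circ> snd) (tl as) = tl bs"
    proof -
      have "tl as = map phi (tl bs)" unfolding asbs by (simp add: map_tl)
      moreover have "map (fst \<circ> snd \<circ> phi) (tl bs) = tl bs"
      proof (rule map_idI)
        fix x assume "x \<in> set (tl bs)"
        then have "x \<in> H" using tlH by blast
        then show "(fst \<circ> snd \<circ> phi) x = x" using phi_H by simp
      qed
      ultimately show ?thesis by simp
    qed
    ultimately show "T bs = snd (snd (hd as)) (M (map (fst \<circ> snd) (tl as)))"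
      using MH unfolding T_def \<alpha>f_def by simp
  next
    assume c: "card (Z 2) = 0 \<and> 1 \<le> card (Z 1)"
    show "T bs = psi (card (Z 1)) as"
    proof (cases "card (Z 1) < n")
      case True
      then show ?thesis unfolding psi_def using TT by simp
    next
      case False
      have Z2: "Z 2 = {}" using c finZ by simp
      have le: "card (Z 1) \<le> Suc n" using card_mono[OF _ ZS] by fastforce
      have "T bs = 0"
      proof (cases "card (Z 1) = Suc n")
        case True
        have allH: "bs ! j \<in> H" if "j < Suc n" for j
        proof -
          have "j \<in> Z 1" using allZ[OF True] that by simp
          then have "ls ! j = 1" using Zmem by simp
          then show ?thesis using bsj[OF that] unfolding Sb_def by simp
        qed
        have tlH: "set (tl bs) \<subseteq> H"
        proof
          fix x assume "x \<in> set (tl bs)"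
          then obtain j where "j < n" "tl bs ! j = x" using tl_in by blast
          then show "x \<in> H" using tl_nth allH by (metis Suc_less_eq)
        qed
        have "hd bs \<in> H" using allH[of 0] hdbs by simp
        then show ?thesis using H_cl[OF tlbs(1) tlH] H_iso unfolding T_def by simp
      next
        case False
        then have c1: "card (Z 1) = n" using le \<open>\<not> card (Z 1) < n\<close> by simp
        then have "card (Z 0) = 1" using parts Z2 by simp
        then obtain j0 where Z0: "Z 0 = {j0}" by (rule card_1_singletonE)
        have "j0 \<in> Z 0" using Z0 by simp
        then have j0: "j0 < Suc n" "ls ! j0 = 0" using Zmem by auto
        have oneH: "ls ! j = 1" if "j \<noteq> j0" "j < Suc n" for j
        proof -
          have "j \<notin> Z 0" "j \<notin> Z 2" using Z0 Z2 that by auto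
          then have "ls ! j \<noteq> 0" "ls ! j \<noteq> 2" using Zmem that by auto
          moreover have "ls ! j < 3" using lt that by simp
          ultimately show ?thesis by linarith
        qed
        define S where "S j = (if j = j0 then Gp else H)" for j
        show "T bs = 0"
        proof (rule TZ[where S = S and jj = j0])
          show "\<And>j. j \<le> n \<Longrightarrow> gr (S j)" unfolding S_def using grGp grH by auto
          show "j0 \<le> n" using j0 by simp
          show "length bs = Suc n" by fact
          show "\<forall>j\<le>n. bs ! j \<in> S j"
          proof (intro allI impI)
            fix j assume jn: "j \<le> n"
            then have jl: "j < Suc n" by simp
            show "bs ! j \<in> S j"
            proof (cases "j = j0")
              case True then show ?thesis using bsj[OF jl] j0 unfolding S_def Sb_def by simp
            next
              case False
              then have "ls ! j = 1" using oneH jl by blast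
              then show ?thesis using bsj[OF jl] False unfolding S_def Sb_def by simp
            qed
          qed
        next
          fix cs :: "'v list" assume cs: "length cs = Suc n" "\<forall>j\<le>n. cs ! j \<in> S j \<and> hom (cs ! j)"
          define rest where "rest = take j0 cs @ drop (Suc j0) cs"
          have lr: "length rest = n" unfolding rest_def using cs j0 by simp
          have rH: "set rest \<subseteq> H"
          proof
            fix x assume xr: "x \<in> set rest"
            obtain i where i: "i < length cs" "i \<noteq> j0" "cs ! i = x"
              using rest_set[OF xr[unfolded rest_def]] by blast
            have "i \<le> n" using i(1) cs(1) by simp
            then have "cs ! i \<in> S i" using cs(2) by blast
            then show "x \<in> H" using i unfolding S_def by simp
          qed
          have "j0 \<le> n" using j0 by simp
          then have "cs ! j0 \<in> S j0" using cs(2) by blast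
          then have "cs ! j0 \<in> Gp" unfolding S_def by simp
          then show "T (cs ! j0 # take j0 cs @ drop (Suc j0) cs) = 0"
            using Gp_left H_cl[OF lr rH] unfolding T_def rest_def[symmetric] by simp
        qed
      qed
      then show ?thesis unfolding psi_def using False by simp
    qed
  next
    assume c: "\<not> (card (Z 0) = Suc n \<or> card (Z 1) = n \<and> card (Z 2) = 1 \<or> card (Z 2) = 0 \<and> 1 \<le> card (Z 1))"
    have "Z 2 \<noteq> {}"
    proof
      assume Z2: "Z 2 = {}"
      then have "card (Z 2) = 0" by simp
      then have "card (Z 1) = 0" using c by simp
      then have "card (Z 0) = Suc n" using parts Z2 by simp
      then show False using c by simp
    qed
    then obtain j where j: "j \<in> Z 2" by blast
    have jj: "j < Suc n" "ls ! j = 2" using j Zmem by auto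
    have "\<exists>k. k < Suc n \<and> k \<noteq> j \<and> ls ! k \<noteq> 1"
    proof (rule ccontr)
      assume "\<not> ?thesis"
      then have others: "\<And>k. k < Suc n \<Longrightarrow> k \<noteq> j \<Longrightarrow> ls ! k = 1" by blast
      have "Z 1 = {..<Suc n} - {j}"
      proof
        show "Z 1 \<subseteq> {..<Suc n} - {j}" using Zmem jj by auto
        show "{..<Suc n} - {j} \<subseteq> Z 1" using Zmem others by auto
      qed
      then have "card (Z 1) = n" using jj by simp
      moreover have "Z 2 = {j}"
      proof
        show "Z 2 \<subseteq> {j}" using Zmem others by fastforce
        show "{j} \<subseteq> Z 2" using Zmem jj by auto
      qed
      ultimately show False using c by simp
    qed
    then obtain k where k: "k < Suc n" "k \<noteq> j" "ls ! k \<noteq> 1" by blast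
    define S where "S i = (if i = j then Ip else if i = k then I else A)" for i
    show "T bs = 0"
    proof (rule TZ[where S = S and jj = j])
      show "\<And>i. i \<le> n \<Longrightarrow> gr (S i)" unfolding S_def using grIp grI gr_AA by auto
      show "j \<le> n" using jj by simp
      show "length bs = Suc n" by fact
      show "\<forall>i\<le>n. bs ! i \<in> S i"
      proof (intro allI impI)
        fix i assume i: "i \<le> n"
        have bi: "bs ! i \<in> Sb (ls ! i)" using bsj i by simp
        show "bs ! i \<in> S i"
        proof (cases "i = j")
          case True then show ?thesis using bi jj unfolding S_def Sb_def by simp
        next
          case False
          show ?thesis
          proof (cases "i = k")
            case True
            have "ls ! k \<noteq> 1" using k by simp
            then have "Sb (ls ! k) \<subseteq> I" by (rule Sb_I)
            then show ?thesis using bi True False unfolding S_def by auto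
          next
            case False2: False
            have "bs ! i \<in> A" using bi Sb_A by blast
            then show ?thesis using False2 False unfolding S_def by simp
          qed
        qed
      qed
    next
      fix cs :: "'v list" assume cs: "length cs = Suc n" "\<forall>i\<le>n. cs ! i \<in> S i \<and> hom (cs ! i)"
      define rest where "rest = take j cs @ drop (Suc j) cs"
      have lr: "length rest = n" unfolding rest_def using cs jj by simp
      have csA: "cs ! i \<in> A" if "i < Suc n" for i
      proof -
        have "i \<le> n" using that by simp
        then have "cs ! i \<in> S i" using cs(2) by blast
        moreover have "S i \<subseteq> A" unfolding S_def using IpA IA by auto
        ultimately show ?thesis by blast
      qed
      have rA: "set rest \<subseteq> A"
      proof
        fix x assume xr: "x \<in> set rest"
        obtain i where ii: "i < length cs" "cs ! i = x"
          using rest_set[OF xr[unfolded rest_def]] by blast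
        have "i < Suc n" using ii(1) cs(1) by simp
        then show "x \<in> A" using csA ii(2) by blast
      qed
      obtain k' where k': "k' < length cs - 1" "rest ! k' = cs ! k"
        using rest_nth[of k cs j] k cs(1) jj unfolding rest_def by auto
      have "k \<le> n" using k by simp
      then have "cs ! k \<in> S k" using cs(2) by blast
      then have "cs ! k \<in> I" using k unfolding S_def by simp
      then have "M rest \<in> I" using ideal_any[OF I_ideal lr rA, of k'] k' cs by simp
      moreover have "j \<le> n" using jj by simp
      then have "cs ! j \<in> S j" using cs(2) by blast
      then have "cs ! j \<in> Ip" unfolding S_def by simp
      ultimately show "T (cs ! j # take j cs @ drop (Suc j) cs) = 0"
        using Ip_left unfolding T_def rest_def[symmetric] by simp
    qed
  qed
qed

lemma psi_zero: "\<forall>as. psi n as = 0 \<and> psi (Suc n) as = 0" unfolding psi_def by simp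

lemma iso_main: "super_iso sc V0 V1 n B M (scD sc) (dpart sc V0 V1 H G0 G1 False)
             (dpart sc V0 V1 H G0 G1 True) (formD V0 V1 Bg) Md phi"
  unfolding super_iso_def W0_def[symmetric] W1_def[symmetric]
proof (intro conjI)
  have "ssum (phi ` V0) (phi ` V1) = phi ` ssum V0 V1"
    by (rule ssum_image) (use phi_add V.subspace_0[OF sub0] V.subspace_0[OF sub1] in \<open>auto simp: A_def\<close>)
  then have e: "ssum W0 W1 = phi ` A" using phi_V0 phi_V1 unfolding A_def by simp
  show "bij_betw phi (ssum V0 V1) (ssum W0 W1)" unfolding bij_betw_def e A_def[symmetric] using phi_inj by simp
  show "phi ` V0 = W0" "phi ` V1 = W1" using phi_V0 phi_V1 .
  show "\<forall>x\<in>ssum V0 V1. \<forall>y\<in>ssum V0 V1. \<forall>c. phi (x + y) = phi x + phi y \<and> phi (sc c x) = scD sc c (phi x)"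
    using phi_add phi_sc unfolding A_def by blast
  show "\<forall>x\<in>ssum V0 V1. \<forall>y\<in>ssum V0 V1. formD V0 V1 Bg (phi x) (phi y) = B x y"
    using phi_iso unfolding A_def by blast
  show "\<forall>as. length as = n \<and> set as \<subseteq> ssum V0 V1 \<longrightarrow> phi (M as) = Md (map phi as)"
    using Md_map unfolding A_def by simp
qed

end

theorem corollary1:
  fixes sc :: "'k::real_normed_field \<Rightarrow> 'v::ab_group_add \<Rightarrow> 'v"
    and V0 V1 :: "'v set" and n :: nat
    and B :: "'v \<Rightarrow> 'v \<Rightarrow> 'k" and M :: "'v list \<Rightarrow> 'v"
    and I H :: "'v set"
  assumes "vector_space sc"
    and "1 \<le> n"
    and "comm_inv_superalg sc V0 V1 n B M"
    and "irreducible_alg sc V0 V1 n B M"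
    and "\<not> simple_alg sc V0 V1 n M"
    and "maximal_nontrivial_ideal sc V0 V1 n M I"
    and "is_subalgebra sc V0 V1 n M H"
    and "isotropic B H"
    and "I \<inter> H = {0}" and "ssum I H = ssum V0 V1"
  shows "\<exists>(G0 :: (nat \<Rightarrow> 'k) set) G1 Bg Mg Md \<psi> \<phi>.
           gen_double_ext sc V0 V1 n M H G0 G1 Bg Mg Md \<psi> \<and>
           (\<forall>as. \<psi> n as = 0 \<and> \<psi> (Suc n) as = 0) \<and>
           super_iso sc V0 V1 n B M (scD sc) (dpart sc V0 V1 H G0 G1 False)
             (dpart sc V0 V1 H G0 G1 True) (formD V0 V1 Bg) Md \<phi>"
proof -
  interpret c: ctx sc V0 V1 n B M I H
    by (rule ctx.intro) (use assms in auto)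
  show ?thesis using c.gde c.psi_zero c.iso_main by blast
qed

end
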